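(* Suppose conditions (i)–(iii) of the context hold. Then there exist $k_0>0$ and $C>0$, independent of $h$ and $k$, such that for every self-adjoint $T\in\mathcal{L}(H)$ and all sufficiently small $h\in(0,h_0)$, $k\in(0,k_0)$, \[ \bigl|\operatorname{tr}\bigl(T(\widetilde Q_{h,k}^\beta\widetilde Q_{h,k}^{\beta*}-\widetilde L_h^{-\beta}\widetilde L_h^{-\beta*})\bigr)\bigr|\le C\bigl(e^{-\pi^2/k}h^{-d}+e^{-\pi^2/(2k)}+e^{-\pi^2/(2k)}f_{\alpha,\beta}(h)\bigr)\|T\|_{\mathcal{L}(H)}, \] where $\widetilde Q_{h,k}^\beta:=Q_{h,k}^\beta\widetilde\Pi_h$, $\widetilde L_h^{-\beta}:=L_h^{-\beta}\widetilde\Pi_h$, $^*$ denotes the $H$-adjoint, and $f_{\alpha,\beta}(h):=h^{d(\alpha\beta-1)}$ if $\alpha\beta\ne1$, $f_{\alpha,\beta}(h):=|\ln h|$ if $\alpha\beta=1$.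
   Context: $H$ separable real Hilbert space; $L\colon\mathscr{D}(L)\subset H\to H$ densely defined, self-adjoint, positive definite with compact inverse, $H$-orthonormal eigenvectors $\{e_j\}$, nondecreasing eigenvalues $\{\lambda_j\}$ with $c_\lambda j^\alpha\le\lambda_j\le C_\lambda j^\alpha$ ($\alpha,c_\lambda,C_\lambda>0$); $\beta\in(0,1)$. $(V_h)_{h\in(0,1)}$ finite-dimensional subspaces of $\mathscr{D}(L^{1/2})$, $N_h=\dim V_h$, $L_h\colon V_h\to V_h$ with $(L_h\psi_h,\phi_h)_H=\langle L\psi_h,\phi_h\rangle$, with $H$-orthonormal eigenvectors $\{e_{j,h}\}_{j=1}^{N_h}$ and nondecreasing eigenvalues $\{\lambda_{j,h}\}$. $\widetilde\Pi_h\colon H\to V_h$, $\widetilde\Pi_hg:=\sum_{j=1}^{N_h}(g,e_j)_He_{j,h}$. For $k>0$, $y_\ell=\ell k$, $K^-=\lceil\pi^2/(4\beta k^2)\rceil$, $K^+=\lceil\pi^2/(4(1-\beta)k^2)\rceil$, $Q_{h,k}^\beta:=\frac{2k\sin(\pi\beta)}{\pi}\sum_{\ell=-K^-}^{K^+}e^{2\beta y_\ell}(\mathrm{Id}_{V_h}+e^{2y_\ell}L_h)^{-1}$. Conditions: (i) there is $d\in\mathbb{N}$ with $N_h\propto h^{-d}$; (ii) there are $C_1,C_2>0$, $h_0\in(0,1)$, $r,s>0$, $q>1$ with $\lambda_j\le\lambda_{j,h}\le\lambda_j+C_1h^r\lambda_j^q$ and $\|e_j-e_{j,h}\|_H^2\le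 C_2h^{2s}\lambda_j^q$ for all $h\in(0,h_0)$, $j\le N_h$; (iii) $\frac1{2\beta}<\alpha\le\min\{\frac{r}{(q-1)d},\frac{2s}{qd}\}$. *)

theory Defs
  imports "HOL-Analysis.Analysis"
begin

text \<open>Spectral model of the operator L (eigenpairs (e j, lam j), indices j \<ge> 1).
  The Hilbert space H is a type 'a of class real_inner + complete_space.\<close>

definition domL12 :: "(nat \<Rightarrow> 'a::real_inner) \<Rightarrow> (nat \<Rightarrow> real) \<Rightarrow> 'a set" where
  "domL12 e lam = {x. summable (\<lambda>j. lam (Suc j) * (inner x (e (Suc j)))\<^sup>2)}"

definition formL :: "(nat \<Rightarrow> 'a::real_inner) \<Rightarrow> (nat \<Rightarrow> real) \<Rightarrow> 'a \<Rightarrow> 'a \<Rightarrow> real" where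
  "formL e lam psi phi = (\<Sum>j. lam (Suc j) * inner psi (e (Suc j)) * inner phi (e (Suc j)))"

definition hadjoint :: "('a::real_inner \<Rightarrow> 'a) \<Rightarrow> 'a \<Rightarrow> 'a" where
  "hadjoint A y = (THE z. \<forall>x. inner (A x) y = inner x z)"

definition trace_on :: "(nat \<Rightarrow> 'a::real_inner) \<Rightarrow> ('a \<Rightarrow> 'a) \<Rightarrow> real" where
  "trace_on e A = (\<Sum>j. inner (A (e (Suc j))) (e (Suc j)))"

definition resolv :: "'a::real_vector set \<Rightarrow> ('a \<Rightarrow> 'a) \<Rightarrow> real \<Rightarrow> 'a \<Rightarrow> 'a" where
  "resolv V A t w = (THE v. v \<in> V \<and> v + t *\<^sub>R A v = w)"

definition Kminus :: "real \<Rightarrow> real \<Rightarrow> int" where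
  "Kminus \<beta> k = \<lceil>pi\<^sup>2 / (4 * \<beta> * k\<^sup>2)\<rceil>"

definition Kplus :: "real \<Rightarrow> real \<Rightarrow> int" where
  "Kplus \<beta> k = \<lceil>pi\<^sup>2 / (4 * (1 - \<beta>) * k\<^sup>2)\<rceil>"

definition Qop :: "'a::real_vector set \<Rightarrow> ('a \<Rightarrow> 'a) \<Rightarrow> real \<Rightarrow> real \<Rightarrow> 'a \<Rightarrow> 'a" where
  "Qop V A \<beta> k w = (2 * k * sin (pi * \<beta>) / pi) *\<^sub>R
     (\<Sum>l\<in>{- Kminus \<beta> k .. Kplus \<beta> k}.
        exp (2 * \<beta> * (of_int l * k)) *\<^sub>R resolv V A (exp (2 * (of_int l * k))) w)"

definition fracpow :: "(nat \<Rightarrow> 'a::real_inner) \<Rightarrow> (nat \<Rightarrow> real) \<Rightarrow> nat \<Rightarrow> real \<Rightarrow> 'a \<Rightarrow> 'a" where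
  "fracpow eh lamh N \<beta> w = (\<Sum>j\<in>{1..N}. (lamh j powr (- \<beta>) * inner w (eh j)) *\<^sub>R eh j)"

definition Pitilde :: "(nat \<Rightarrow> 'a::real_inner) \<Rightarrow> (nat \<Rightarrow> 'a) \<Rightarrow> nat \<Rightarrow> 'a \<Rightarrow> 'a" where
  "Pitilde e eh N g = (\<Sum>j\<in>{1..N}. inner g (e j) *\<^sub>R eh j)"

definition f_ab :: "real \<Rightarrow> real \<Rightarrow> real \<Rightarrow> real \<Rightarrow> real" where
  "f_ab d \<alpha> \<beta> h = (if \<alpha> * \<beta> \<noteq> 1 then h powr (d * (\<alpha> * \<beta> - 1)) else \<bar>ln h\<bar>)"

end

theory Submission
  imports Defs "HOL-Complex_Analysis.Complex_Analysis" "HOL-Real_Asymp.Real_Asymp"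
begin

definition Gc :: "real \<Rightarrow> complex \<Rightarrow> complex" where
  "Gc b z = exp (of_real (2*b) * z) / (1 + exp (2*z))"

definition mb :: "real \<Rightarrow> real \<Rightarrow> real" where
  "mb b x = min (exp (2*b*x)) (exp (2*(b-1)*x))"

lemma cos_ge_half:
  fixes y :: real assumes "\<bar>y\<bar> \<le> 2*pi/3" shows "cos y \<ge> -1/2"
proof -
  have "cos \<bar>y\<bar> \<ge> cos (2*pi/3)"
    using assms by (intro cos_monotone_0_pi_le) auto
  moreover have "cos (2*pi/3) = -1/2"
  proof -
    have "cos (2*pi/3) = cos (pi - pi/3)" by (simp add: field_simps)
    also have "\<dots> = - cos (pi/3)" by (simp only: cos_pi_minus)
    finally show ?thesis by (simp add: cos_60)
  qed
  moreover have "cos \<bar>y\<bar> = cos y" by (simp add: abs_if)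
  ultimately show ?thesis by simp
qed

lemma norm_one_plus_exp_lower:
  fixes z :: complex assumes "\<bar>Im z\<bar> \<le> pi/3"
  shows "cmod (1 + exp (2*z)) \<ge> max 1 (exp (2 * Re z)) / 2"
proof -
  define t where "t = exp (2 * Re z)"
  have t: "t > 0" by (simp add: t_def)
  have c: "cos (2 * Im z) \<ge> -1/2" using assms by (intro cos_ge_half) auto
  have re: "Re (exp (2*z)) = t * cos (2 * Im z)" and im: "Im (exp (2*z)) = t * sin (2*Im z)"
    by (simp_all add: t_def Re_exp Im_exp)
  have sq: "\<And>c s. s^2 + c^2 = 1 \<Longrightarrow> (1 + t * c)^2 + (t * s)^2 = 1 + 2*t*c + t^2"
  proof -
    fix c s :: real assume h: "s^2 + c^2 = 1"
    have "(1 + t * c)^2 + (t * s)^2 = 1 + 2*t*c + t^2 * (s^2 + c^2)"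
      by (simp add: power2_eq_square algebra_simps)
    thus "(1 + t * c)^2 + (t * s)^2 = 1 + 2*t*c + t^2" using h by simp
  qed
  have "(cmod (1 + exp (2*z)))^2 = (1 + t * cos (2 * Im z))^2 + (t * sin (2*Im z))^2"
    by (simp add: cmod_power2 re im)
  also have "\<dots> = 1 + 2*t*cos (2*Im z) + t^2"
    by (rule sq) (rule sin_cos_squared_add)
  finally have eq: "(cmod (1 + exp (2*z)))^2 = 1 + 2*t*cos (2*Im z) + t^2" .
  have "t * (-1/2) \<le> t * cos (2*Im z)" using c t by (intro mult_left_mono) auto
  hence "2*t*cos (2*Im z) \<ge> -t" by simp
  hence ge: "(cmod (1 + exp (2*z)))^2 \<ge> 1 - t + t^2" using eq by simp
  have "(max 1 t / 2)^2 \<le> 1 - t + t^2"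
  proof (cases "t \<le> 1")
    case True
    have "0 \<le> (t-1/2)^2" by simp
    moreover have "(t-1/2)^2 = t^2 - t + 1/4" by (simp add: power2_eq_square algebra_simps)
    moreover have "(max 1 t / 2)^2 = 1/4" using True by (simp add: max_def power2_eq_square)
    ultimately show ?thesis by linarith
  next
    case False
    have "0 \<le> (t-2/3)^2" by simp
    moreover have "(t-2/3)^2 = t^2 - 4/3*t + 4/9" by (simp add: power2_eq_square algebra_simps)
    moreover have "(max 1 t / 2)^2 = t^2/4" using False by (simp add: max_def power2_eq_square)
    ultimately show ?thesis by linarith
  qed
  hence "(max 1 t / 2)^2 \<le> (cmod (1 + exp (2*z)))^2" using ge by linarith
  hence "max 1 t / 2 \<le> cmod (1 + exp (2*z))"
    by (rule power2_le_imp_le) simp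
  thus ?thesis by (simp add: t_def)
qed

lemma norm_Gc_le:
  assumes "\<bar>Im z\<bar> \<le> pi/3"
  shows "cmod (Gc b z) \<le> 2 * mb b (Re z)"
proof -
  have d: "cmod (1 + exp (2*z)) \<ge> max 1 (exp (2 * Re z)) / 2"
    by (rule norm_one_plus_exp_lower[OF assms])
  have pos: "max 1 (exp (2 * Re z)) / 2 > 0" by simp
  have "cmod (Gc b z) = exp (2*b*Re z) / cmod (1 + exp (2*z))"
    by (simp add: Gc_def norm_divide)
  also have "\<dots> \<le> exp (2*b*Re z) / (max 1 (exp (2 * Re z)) / 2)"
  proof (rule divide_left_mono[OF d])
    show "0 < cmod (1 + exp (2*z)) * (max 1 (exp (2 * Re z)) / 2)"
      using pos d by (intro mult_pos_pos) linarith+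
  qed simp
  also have "\<dots> = 2 * (exp (2*b*Re z) / max 1 (exp (2 * Re z)))" by simp
  also have "exp (2*b*Re z) / max 1 (exp (2 * Re z)) = mb b (Re z)"
  proof -
    have "exp (2*b*Re z) / exp (2 * Re z) = exp (2*(b-1)*Re z)"
      by (simp add: exp_diff[symmetric] algebra_simps)
    moreover have "(exp (2*b*Re z) / max 1 (exp (2 * Re z))) = min (exp (2*b*Re z)) (exp (2*b*Re z) / exp (2 * Re z))"
      by (auto simp: max_def min_def divide_le_eq_1 field_simps)
    ultimately show ?thesis by (simp add: mb_def)
  qed
  finally show ?thesis .
qed

lemma mb_shift:
  assumes "0 < b" "b < 1"
  shows "mb b (x + t) \<le> exp (2*\<bar>x\<bar>) * mb b t"
proof -
  have 1: "exp (2*b*(x+t)) \<le> exp (2*\<bar>x\<bar>) * exp (2*b*t)"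
  proof -
    have "b*x \<le> b*\<bar>x\<bar>" using assms by (intro mult_left_mono) auto
    also have "\<dots> \<le> \<bar>x\<bar>" using assms by (intro mult_left_le_one_le) auto
    finally have "2*b*(x+t) \<le> 2*\<bar>x\<bar> + 2*b*t" by (simp add: algebra_simps)
    thus ?thesis by (simp add: exp_add[symmetric])
  qed
  have 2: "exp (2*(b-1)*(x+t)) \<le> exp (2*\<bar>x\<bar>) * exp (2*(b-1)*t)"
  proof -
    have "(b-1)*x \<le> (1-b)*\<bar>x\<bar>"
    proof (cases "x \<ge> 0")
      case True
      have "(b-1)*x \<le> 0" using assms True by (intro mult_nonpos_nonneg) auto
      moreover have "0 \<le> (1-b)*\<bar>x\<bar>" using assms by simp
      ultimately show ?thesis by linarith
    next
      case False
      hence "\<bar>x\<bar> = -x" by simp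
      thus ?thesis by (simp add: algebra_simps)
    qed
    also have "\<dots> \<le> \<bar>x\<bar>" using assms by (intro mult_left_le_one_le) auto
    finally have "(b-1)*x \<le> \<bar>x\<bar>" .
    hence "2*(b-1)*(x+t) \<le> 2*\<bar>x\<bar> + 2*(b-1)*t" by (simp add: algebra_simps)
    thus ?thesis by (simp add: exp_add[symmetric])
  qed
  have "min (exp (2*b*(x+t))) (exp (2*(b-1)*(x+t))) \<le> min (exp (2*\<bar>x\<bar>) * exp (2*b*t)) (exp (2*\<bar>x\<bar>) * exp (2*(b-1)*t))"
    using 1 2 by (rule min.mono)
  also have "\<dots> = exp (2*\<bar>x\<bar>) * min (exp (2*b*t)) (exp (2*(b-1)*t))"
    by (simp add: min_mult_distrib_left)
  finally show ?thesis unfolding mb_def .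
qed

definition Gterm :: "real \<Rightarrow> real \<Rightarrow> complex \<Rightarrow> nat \<Rightarrow> complex" where
  "Gterm b k z n = Gc b (z + of_real (real n * k)) + Gc b (z - of_real (real (Suc n) * k))"

definition Pc :: "real \<Rightarrow> real \<Rightarrow> complex \<Rightarrow> complex" where
  "Pc b k z = (\<Sum>n. Gterm b k z n)"

lemma mb_le1: "mb b x \<le> exp (2*b*x)" by (simp add: mb_def)
lemma mb_le2: "mb b x \<le> exp (2*(b-1)*x)" by (simp add: mb_def)
lemma mb_pos: "mb b x > 0" by (simp add: mb_def)

lemma Gc_bound_plus:
  assumes b: "0 < b" "b < 1" and k: "k > 0" and im: "\<bar>Im z\<bar> \<le> pi/3"
  shows "cmod (Gc b (z + of_real (real n * k))) \<le> 2 * exp (2*\<bar>Re z\<bar>) * exp (-2*(1-b)*k) ^ n"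
proof -
  have "cmod (Gc b (z + of_real (real n * k))) \<le> 2 * mb b (Re z + real n * k)"
    using norm_Gc_le[of "z + of_real (real n * k)" b] im by simp
  also have "mb b (Re z + real n * k) \<le> exp (2*\<bar>Re z\<bar>) * mb b (real n * k)"
    by (rule mb_shift[OF b])
  also have "mb b (real n * k) \<le> exp (2*(b-1)*(real n * k))" by (rule mb_le2)
  also have "exp (2*(b-1)*(real n * k)) = exp (-2*(1-b)*k) ^ n"
    by (simp add: exp_of_nat_mult[symmetric] algebra_simps)
  finally show ?thesis by (simp add: mult_left_mono)
qed

lemma Gc_bound_minus:
  assumes b: "0 < b" "b < 1" and k: "k > 0" and im: "\<bar>Im z\<bar> \<le> pi/3"
  shows "cmod (Gc b (z - of_real (real (Suc n) * k))) \<le> 2 * exp (2*\<bar>Re z\<bar>) * exp (-2*b*k) ^ Suc n"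
proof -
  have "cmod (Gc b (z - of_real (real (Suc n) * k))) \<le> 2 * mb b (Re (z - of_real (real (Suc n) * k)))"
    using norm_Gc_le[of "z - of_real (real (Suc n) * k)" b] im by simp
  also have "Re (z - of_real (real (Suc n) * k)) = Re z + (- real (Suc n) * k)" by (simp add: algebra_simps)
  also have "mb b (Re z + (- real (Suc n) * k)) \<le> exp (2*\<bar>Re z\<bar>) * mb b (- real (Suc n) * k)"
    by (rule mb_shift[OF b])
  also have "mb b (- real (Suc n) * k) \<le> exp (2*b*(- real (Suc n) * k))" by (rule mb_le1)
  also have "exp (2*b*(- real (Suc n) * k)) = exp (-2*b*k) ^ Suc n"
    by (simp only: exp_of_nat_mult[symmetric]) (simp add: algebra_simps)
  finally show ?thesis by (simp add: mult_left_mono)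
qed

lemma exp_neg_lt1: "(x::real) < 0 \<Longrightarrow> norm (exp x) < 1" by simp
lemma neg1: "0 < b \<Longrightarrow> b < 1 \<Longrightarrow> 0 < k \<Longrightarrow> -2*(1-b)*k < (0::real)"
proof -
  assume "0 < b" "b < 1" "0 < k"
  hence "0 < (1-b)*k" by (intro mult_pos_pos) auto
  thus ?thesis by linarith
qed
lemma neg2: "0 < b \<Longrightarrow> 0 < k \<Longrightarrow> -2*b*k < (0::real)"
  by (simp add: mult_pos_pos)

lemma Gterm_bound:
  assumes b: "0 < b" "b < 1" and k: "k > 0" and im: "\<bar>Im z\<bar> \<le> pi/3"
  shows "cmod (Gterm b k z n) \<le> 2 * exp (2*\<bar>Re z\<bar>) * (exp (-2*(1-b)*k) ^ n + exp (-2*b*k) ^ Suc n)"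
proof -
  have "cmod (Gterm b k z n) \<le> cmod (Gc b (z + of_real (real n * k))) + cmod (Gc b (z - of_real (real (Suc n) * k)))"
    unfolding Gterm_def by (rule norm_triangle_ineq)
  also have "\<dots> \<le> 2 * exp (2*\<bar>Re z\<bar>) * exp (-2*(1-b)*k) ^ n + 2 * exp (2*\<bar>Re z\<bar>) * exp (-2*b*k) ^ Suc n"
    by (intro add_mono Gc_bound_plus Gc_bound_minus assms)
  finally show ?thesis by (simp add: algebra_simps)
qed

lemma summable_geo2:
  fixes b k C :: real
  assumes b: "0 < b" "b < 1" and k: "k > 0"
  shows "summable (\<lambda>n. C * (exp (-2*(1-b)*k) ^ n + exp (-2*b*k) ^ Suc n))"
proof -
  have 1: "summable (\<lambda>n. exp (-2*(1-b)*k) ^ n)"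
    by (intro summable_geometric exp_neg_lt1 neg1 assms)
  have 2: "summable (\<lambda>n. exp (-2*b*k) ^ Suc n)"
    by (subst summable_Suc_iff) (intro summable_geometric exp_neg_lt1 neg2 assms)
  show ?thesis using 1 2 by (intro summable_mult summable_add)
qed

lemma Gterm_summable:
  assumes b: "0 < b" "b < 1" and k: "k > 0" and im: "\<bar>Im z\<bar> \<le> pi/3"
  shows "summable (\<lambda>n. Gterm b k z n)"
  by (rule summable_norm_cancel, rule summable_comparison_test[OF _ summable_geo2[OF b k]])
     (use Gterm_bound[OF b k im] in auto)

lemma Gc_plus_summable:
  assumes b: "0 < b" "b < 1" and k: "k > 0" and im: "\<bar>Im z\<bar> \<le> pi/3"
  shows "summable (\<lambda>n. Gc b (z + of_real (real n * k)))"
proof -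
  have 1: "summable (\<lambda>n. 2 * exp (2*\<bar>Re z\<bar>) * exp (-2*(1-b)*k) ^ n)"
    by (intro summable_mult summable_geometric exp_neg_lt1 neg1 assms)
  show ?thesis
    by (rule summable_norm_cancel, rule summable_comparison_test[OF _ 1])
       (use Gc_bound_plus[OF b k im] in auto)
qed

lemma Gc_minus_summable:
  assumes b: "0 < b" "b < 1" and k: "k > 0" and im: "\<bar>Im z\<bar> \<le> pi/3"
  shows "summable (\<lambda>n. Gc b (z - of_real (real (Suc n) * k)))"
proof -
  have 1: "summable (\<lambda>n. 2 * exp (2*\<bar>Re z\<bar>) * exp (-2*b*k) ^ Suc n)"
    by (intro summable_mult, subst summable_Suc_iff, intro summable_geometric exp_neg_lt1 neg2 assms)
  show ?thesis
    by (rule summable_norm_cancel, rule summable_comparison_test[OF _ 1])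
       (use Gc_bound_minus[OF b k im] in auto)
qed

lemma Pc_periodic:
  assumes b: "0 < b" "b < 1" and k: "k > 0" and im: "\<bar>Im z\<bar> \<le> pi/3"
  shows "Pc b k (z + of_real k) = Pc b k z"
proof -
  define A where "A = (\<lambda>n. Gc b (z + of_real (real n * k)))"
  define B where "B = (\<lambda>n. Gc b (z - of_real (real (Suc n) * k)))"
  have sA: "summable A" unfolding A_def by (rule Gc_plus_summable[OF assms])
  have sB: "summable B" unfolding B_def by (rule Gc_minus_summable[OF assms])
  have P: "Pc b k z = suminf A + suminf B"
    unfolding Pc_def Gterm_def A_def[symmetric] B_def[symmetric]
    using sA sB by (subst suminf_add) (auto simp: A_def B_def)
  have e1: "Gc b (z + of_real k + of_real (real n * k)) = A (Suc n)" for n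
    by (simp add: A_def algebra_simps)
  define B' where "B' = (\<lambda>n. Gc b (z + of_real k - of_real (real (Suc n) * k)))"
  have e2: "B' (Suc n) = B n" for n by (simp add: B'_def B_def algebra_simps)
  have e3: "B' 0 = A 0" by (simp add: B'_def A_def)
  have sA': "summable (\<lambda>n. A (Suc n))" using sA by (subst summable_Suc_iff)
  have sB': "summable B'"
    using sB by (subst summable_Suc_iff[symmetric]) (simp add: e2)
  have fe: "(\<lambda>n. Gterm b k (z + of_real k) n) = (\<lambda>n. A (Suc n) + B' n)"
    by (rule ext) (simp only: Gterm_def e1 B'_def)
  have "Pc b k (z + of_real k) = (\<Sum>n. A (Suc n)) + suminf B'"
    unfolding Pc_def fe using sA' sB' by (rule suminf_add[symmetric])
  also have "(\<Sum>n. A (Suc n)) = suminf A - A 0" by (rule suminf_split_head[OF sA])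
  also have "suminf B' = (\<Sum>n. B' (Suc n)) + B' 0" by (rule suminf_split_initial_segment[OF sB', of 1, simplified]) 
  also have "(\<Sum>n. B' (Suc n)) = suminf B" by (simp add: e2)
  finally show ?thesis using P e3 by simp
qed

definition S0 :: "complex set" where "S0 = box (Complex (-1) (-pi/3)) (Complex 2 (pi/3))"

lemma S0_iff: "z \<in> S0 \<longleftrightarrow> -1 < Re z \<and> Re z < 2 \<and> -pi/3 < Im z \<and> Im z < pi/3"
  by (simp add: S0_def in_box_complex_iff)

lemma open_S0: "open S0" unfolding S0_def by (rule open_box)
lemma convex_S0: "convex S0" by (simp add: S0_def)

lemma denom_nz: "\<bar>Im z\<bar> \<le> pi/3 \<Longrightarrow> 1 + exp (2*z) \<noteq> 0"
  using norm_one_plus_exp_lower[of z] by (auto simp: max_def split: if_splits)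

lemma Gc_shift_holo:
  "(\<lambda>z. Gc b (z + c)) holomorphic_on {z. \<bar>Im z\<bar> < pi/3 - \<bar>Im c\<bar>}"
proof -
  have "1 + exp (2*z + 2*c) \<noteq> 0" if "\<bar>Im z\<bar> < pi/3 - \<bar>Im c\<bar>" for z
  proof -
    have tri: "\<bar>Im z + Im c\<bar> \<le> \<bar>Im z\<bar> + \<bar>Im c\<bar>" by (rule abs_triangle_ineq)
    have "Im (z+c) = Im z + Im c" by simp
    hence "\<bar>Im (z+c)\<bar> \<le> pi/3" using tri that by linarith
    from denom_nz[OF this] show ?thesis by (simp add: distrib_left)
  qed
  thus ?thesis unfolding Gc_def
    by (intro holomorphic_intros) (auto simp: distrib_left)
qed

lemma Gterm_holo:
  "(\<lambda>z. Gterm b k z n) holomorphic_on S0"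
proof -
  have 1: "(\<lambda>z. Gc b (z + of_real (real n * k))) holomorphic_on S0"
    by (rule holomorphic_on_subset[OF Gc_shift_holo]) (auto simp: S0_iff)
  have 2: "(\<lambda>z. Gc b (z + (- of_real (real (Suc n) * k)))) holomorphic_on S0"
    by (rule holomorphic_on_subset[OF Gc_shift_holo]) (auto simp: S0_iff)
  show ?thesis unfolding Gterm_def using holomorphic_on_add[OF 1 2] by simp
qed

definition MB :: "real \<Rightarrow> real \<Rightarrow> nat \<Rightarrow> real" where
  "MB b k n = 2 * exp 4 * (exp (-2*(1-b)*k) ^ n + exp (-2*b*k) ^ Suc n)"

lemma Gterm_MB:
  assumes b: "0 < b" "b < 1" and k: "k > 0" and im: "\<bar>Im z\<bar> \<le> pi/3" and re: "\<bar>Re z\<bar> \<le> 2"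
  shows "cmod (Gterm b k z n) \<le> MB b k n"
proof -
  have "cmod (Gterm b k z n) \<le> 2 * exp (2*\<bar>Re z\<bar>) * (exp (-2*(1-b)*k) ^ n + exp (-2*b*k) ^ Suc n)"
    by (rule Gterm_bound[OF b k im])
  also have "\<dots> \<le> 2 * exp 4 * (exp (-2*(1-b)*k) ^ n + exp (-2*b*k) ^ Suc n)"
    using re by (intro mult_right_mono mult_left_mono) auto
  finally show ?thesis by (simp add: MB_def)
qed

lemma MB_summable: "0 < b \<Longrightarrow> b < 1 \<Longrightarrow> k > 0 \<Longrightarrow> summable (MB b k)"
  unfolding MB_def using summable_geo2[of b k "2 * exp 4"] by (simp add: mult.assoc)

lemma Pc_holo:
  assumes b: "0 < b" "b < 1" and k: "k > 0"
  shows "Pc b k holomorphic_on S0"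
proof -
  have ul: "uniform_limit S0 (\<lambda>N z. \<Sum>n<N. Gterm b k z n) (\<lambda>z. \<Sum>n. Gterm b k z n) sequentially"
    by (rule Weierstrass_m_test[OF _ MB_summable[OF b k]])
       (rule Gterm_MB[OF b k], auto simp: S0_iff)
  show ?thesis unfolding Pc_def
  proof (rule holomorphic_uniform_sequence[OF open_S0])
    show "(\<lambda>z. \<Sum>n<N. Gterm b k z n) holomorphic_on S0" for N
      by (intro holomorphic_on_sum Gterm_holo)
    fix x assume "x \<in> S0"
    then obtain d where d: "d > 0" "cball x d \<subseteq> S0"
      using open_S0 open_contains_cball by blast
    show "\<exists>d>0. cball x d \<subseteq> S0 \<and> uniform_limit (cball x d) (\<lambda>N z. \<Sum>n<N. Gterm b k z n) (\<lambda>z. \<Sum>n. Gterm b k z n) sequentially"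
      using d uniform_limit_on_subset[OF ul d(2)] by blast
  qed
qed

lemma frac_aux1: "(E::real) > 1 \<Longrightarrow> k * (1 / (1 - 1/E)) = k + k / (E - 1)"
  by (simp add: field_simps)
lemma frac_aux2: "(E::real) > 1 \<Longrightarrow> (1/E) / (1 - 1/E) = 1 / (E - 1)"
  by (simp add: field_simps)

lemma geo_k_bound1:
  fixes c k :: real assumes "c > 0" "k > 0"
  shows "k * (1 / (1 - exp (-c*k))) \<le> k + 1/c"
proof -
  have e: "exp (c*k) \<ge> 1 + c*k" by (rule exp_ge_add_one_self)
  have pos: "c*k > 0" using assms by simp
  have E: "exp (c*k) > 1" using pos e by linarith
  have "exp (-c*k) = 1 / exp (c*k)" by (simp add: exp_minus field_simps)
  hence "k * (1 / (1 - exp (-c*k))) = k + k / (exp (c*k) - 1)"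
    using frac_aux1[OF E, of k] by simp
  also have "k / (exp (c*k) - 1) \<le> k / (c*k)"
  proof (rule divide_left_mono)
    show "c*k \<le> exp (c*k) - 1" using e by linarith
  qed (use assms pos in auto)
  also have "k / (c*k) = 1/c" using assms by simp
  finally show ?thesis by simp
qed

lemma geo_k_bound2:
  fixes c k :: real assumes "c > 0" "k > 0"
  shows "k * (exp (-c*k) / (1 - exp (-c*k))) \<le> 1/c"
proof -
  have e: "exp (c*k) \<ge> 1 + c*k" by (rule exp_ge_add_one_self)
  have pos: "c*k > 0" using assms by simp
  have E: "exp (c*k) > 1" using pos e by linarith
  have "exp (-c*k) = 1 / exp (c*k)" by (simp add: exp_minus field_simps)
  hence "exp (-c*k) / (1 - exp (-c*k)) = 1 / (exp (c*k) - 1)"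
    using frac_aux2[OF E] by simp
  hence "k * (exp (-c*k) / (1 - exp (-c*k))) = k / (exp (c*k) - 1)" by simp
  also have "k / (exp (c*k) - 1) \<le> k / (c*k)"
  proof (rule divide_left_mono)
    show "c*k \<le> exp (c*k) - 1" using e by linarith
  qed (use assms pos in auto)
  also have "k / (c*k) = 1/c" using assms by simp
  finally show ?thesis .
qed

definition KB :: "real \<Rightarrow> real" where
  "KB b = 2 * exp 4 * (1 + 1/(2*(1-b)) + 1/(2*b))"

lemma MB_sum_bound:
  assumes b: "0 < b" "b < 1" and k: "0 < k" "k \<le> 1"
  shows "k * suminf (MB b k) \<le> KB b"
proof -
  define c1 where "c1 = exp (-2*(1-b)*k)"
  define c2 where "c2 = exp (-2*b*k)"
  have c1: "norm c1 < 1" unfolding c1_def by (intro exp_neg_lt1 neg1 assms)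
  have c2: "norm c2 < 1" unfolding c2_def by (intro exp_neg_lt1 neg2 assms)
  have s1: "(\<lambda>n. c1^n) sums (1/(1-c1))" using geometric_sums[OF c1] by simp
  have s2: "(\<lambda>n. c2^Suc n) sums (c2 * (1/(1-c2)))"
    using sums_mult[OF geometric_sums[OF c2], of c2] by simp
  have "MB b k sums (2 * exp 4 * (1/(1-c1) + c2 * (1/(1-c2))))"
    unfolding MB_def c1_def[symmetric] c2_def[symmetric]
    by (intro sums_mult sums_add s1 s2)
  hence eq: "suminf (MB b k) = 2 * exp 4 * (1/(1-c1) + c2 * (1/(1-c2)))" by (rule sums_unique[symmetric])
  have b1: "k * (1/(1-c1)) \<le> k + 1/(2*(1-b))"
    using geo_k_bound1[of "2*(1-b)" k] b k unfolding c1_def by (simp add: mult.assoc)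
  have b2: "k * (c2 * (1/(1-c2))) \<le> 1/(2*b)"
    using geo_k_bound2[of "2*b" k] b k unfolding c2_def by (simp add: mult.assoc)
  have "k * suminf (MB b k) = 2 * exp 4 * (k * (1/(1-c1)) + k * (c2 * (1/(1-c2))))"
    by (simp add: eq algebra_simps)
  also have "\<dots> \<le> 2 * exp 4 * (k + 1/(2*(1-b)) + 1/(2*b))"
    using b1 b2 by (intro mult_left_mono) auto
  also have "\<dots> \<le> KB b" unfolding KB_def using k by (intro mult_left_mono) auto
  finally show ?thesis .
qed

lemma Pc_bound:
  assumes b: "0 < b" "b < 1" and k: "0 < k" "k \<le> 1"
    and im: "\<bar>Im z\<bar> \<le> pi/3" and re: "\<bar>Re z\<bar> \<le> 2"
  shows "k * cmod (Pc b k z) \<le> KB b"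
proof -
  have "cmod (Pc b k z) \<le> suminf (MB b k)"
    unfolding Pc_def by (rule norm_suminf_le[OF Gterm_MB[OF b k(1) im re] MB_summable[OF b k(1)]])
  hence "k * cmod (Pc b k z) \<le> k * suminf (MB b k)" using k by (intro mult_left_mono) auto
  also have "\<dots> \<le> KB b" by (rule MB_sum_bound[OF b k])
  finally show ?thesis .
qed

lemma ci_rect4:
  fixes f :: "complex \<Rightarrow> complex" and a1 a3 :: complex
  defines "b2 \<equiv> Complex (Re a3) (Im a1)" and "b4 \<equiv> Complex (Re a1) (Im a3)"
  assumes c1: "continuous_on (closed_segment a1 b2) f"
      and c2: "continuous_on (closed_segment b2 a3) f"
      and c3: "continuous_on (closed_segment a3 b4) f"
      and c4: "continuous_on (closed_segment b4 a1) f"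
  shows "contour_integral (rectpath a1 a3) f =
           contour_integral (linepath a1 b2) f + contour_integral (linepath b2 a3) f +
           contour_integral (linepath a3 b4) f + contour_integral (linepath b4 a1) f"
proof -
  have h1: "(f has_contour_integral contour_integral (linepath a1 b2) f) (linepath a1 b2)"
    by (rule has_contour_integral_integral, rule contour_integrable_continuous_linepath[OF c1])
  have h2: "(f has_contour_integral contour_integral (linepath b2 a3) f) (linepath b2 a3)"
    by (rule has_contour_integral_integral, rule contour_integrable_continuous_linepath[OF c2])
  have h3: "(f has_contour_integral contour_integral (linepath a3 b4) f) (linepath a3 b4)"
    by (rule has_contour_integral_integral, rule contour_integrable_continuous_linepath[OF c3])
  have h4: "(f has_contour_integral contour_integral (linepath b4 a1) f) (linepath b4 a1)"
    by (rule has_contour_integral_integral, rule contour_integrable_continuous_linepath[OF c4])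
  have "(f has_contour_integral (contour_integral (linepath a1 b2) f + (contour_integral (linepath b2 a3) f +
           (contour_integral (linepath a3 b4) f + contour_integral (linepath b4 a1) f))))
         (linepath a1 b2 +++ linepath b2 a3 +++ linepath a3 b4 +++ linepath b4 a1)"
    by (intro has_contour_integral_join h1 h2 h3 h4 valid_path_join valid_path_linepath) auto
  hence "(f has_contour_integral (contour_integral (linepath a1 b2) f + (contour_integral (linepath b2 a3) f +
           (contour_integral (linepath a3 b4) f + contour_integral (linepath b4 a1) f)))) (rectpath a1 a3)"
    by (simp add: rectpath_def Let_def b2_def b4_def)
  thus ?thesis by (simp add: contour_integral_unique add.assoc)
qed

lemma linepath_translate: "linepath (p + c) (q + c) = (+) c \<circ> linepath p q"
  by (rule ext) (simp add: linepath_def algebra_simps scaleR_conv_of_real)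

lemma ci_periodic_cancel:
  fixes f :: "complex \<Rightarrow> complex"
  assumes per: "\<And>w. w \<in> closed_segment p q \<Longrightarrow> f (w + c) = f w"
      and cont: "continuous_on (closed_segment p q) f"
  shows "contour_integral (linepath (p + c) (q + c)) f + contour_integral (linepath q p) f = 0"
proof -
  have "contour_integral (linepath (p + c) (q + c)) f = contour_integral (linepath p q) (\<lambda>x. f (x + c))"
    by (simp add: linepath_translate contour_integral_translate)
  also have "\<dots> = contour_integral (linepath p q) f"
    by (rule contour_integral_eq) (use per in auto)
  also have "\<dots> = - contour_integral (linepath q p) f"
    by (rule contour_integral_reverse_linepath[OF cont])
  finally show ?thesis by simp
qed

lemma exp_neg1_le_half: "exp (-1::real) \<le> 1/2"
proof -
  have "exp (1::real) \<ge> 2" using exp_ge_add_one_self[of 1] by simp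
  thus ?thesis by (simp add: exp_minus field_simps)
qed

lemma cot_bound_lower:
  fixes u :: complex and t :: real
  assumes "Im u = -t" "t > 0"
  shows "sin u \<noteq> 0" "cmod (cos u / sin u - \<i>) \<le> 2 * exp (-2*t) / (1 - exp (-2*t))"
proof -
  define p where "p = exp (\<i> * u)"
  define q where "q = exp (-(\<i> * u))"
  have np: "cmod p = exp t" using assms by (simp add: p_def)
  have nq: "cmod q = exp (-t)" using assms by (simp add: q_def)
  have pq: "p * q = 1" by (simp add: p_def q_def exp_minus)
  have lt: "exp (-t) < exp t" using assms by simp
  have "cmod (p - q) \<ge> cmod p - cmod q" by (rule norm_triangle_ineq2)
  hence dpq: "cmod (p - q) \<ge> exp t - exp (-t)" using np nq by simp
  hence pq0: "p - q \<noteq> 0" using lt by auto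
  have s: "sin u = (p - q) / (2*\<i>)" by (simp add: sin_exp_eq p_def q_def)
  have c: "cos u = (p + q) / 2" by (simp add: cos_exp_eq p_def q_def)
  show "sin u \<noteq> 0" using s pq0 by simp
  have "cos u / sin u - \<i> = 2 * \<i> * q / (p - q)"
    using pq0 by (simp add: s c field_simps)
  hence "cmod (cos u / sin u - \<i>) = 2 * exp (-t) / cmod (p - q)"
    by (simp add: norm_mult norm_divide nq)
  also have "\<dots> \<le> 2 * exp (-t) / (exp t - exp (-t))"
  proof (rule divide_left_mono[OF dpq])
    have "exp t - exp (-t) > 0" using lt by simp
    thus "0 < cmod (p - q) * (exp t - exp (- t))" using dpq by (intro mult_pos_pos) auto
  qed simp
  also have "\<dots> = 2 * exp (-2*t) / (1 - exp (-2*t))"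
  proof -
    have "exp t * exp (-2*t) = exp (-t)" by (simp add: exp_add[symmetric])
    moreover have "exp t * 1 - exp t * exp (-2*t) = exp t - exp (-t)" using calculation by simp
    moreover have "1 - exp (-2*t) > 0" using assms by simp
    ultimately show ?thesis by (simp add: field_simps)
  qed
  finally show "cmod (cos u / sin u - \<i>) \<le> 2 * exp (-2*t) / (1 - exp (-2*t))" .
qed

lemma cot_bound_upper:
  fixes u :: complex and t :: real
  assumes "Im u = t" "t > 0"
  shows "sin u \<noteq> 0" "cmod (cos u / sin u + \<i>) \<le> 2 * exp (-2*t) / (1 - exp (-2*t))"
proof -
  have "Im (-u) = -t" using assms by simp
  note cb = cot_bound_lower[OF this assms(2)]
  show "sin u \<noteq> 0" using cb(1) by simp
  have "cos (-u) / sin (-u) - \<i> = - (cos u / sin u + \<i>)" by simp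
  hence "cmod (cos u / sin u + \<i>) = cmod (cos (-u) / sin (-u) - \<i>)" by (simp only: norm_minus_cancel)
  thus "cmod (cos u / sin u + \<i>) \<le> 2 * exp (-2*t) / (1 - exp (-2*t))" using cb(2) by simp
qed

lemma cot_simpl_bound:
  fixes t :: real assumes "2*t \<ge> 1"
  shows "2 * exp (-2*t) / (1 - exp (-2*t)) \<le> 4 * exp (-2*t)"
proof -
  have "exp (-2*t) \<le> exp (-1)" using assms by simp
  hence h: "exp (-2*t) \<le> 1/2" using exp_neg1_le_half by linarith
  hence "1 - exp (-2*t) \<ge> 1/2" by simp
  hence "2 * exp (-2*t) / (1 - exp (-2*t)) \<le> 2 * exp (-2*t) / (1/2)"
    by (intro divide_left_mono) (use assms in auto)
  thus ?thesis by simp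
qed

lemma rect_segs_sub:
  fixes a1 a3 :: complex
  assumes "Re a1 \<le> Re a3" "Im a1 \<le> Im a3"
  shows "closed_segment a1 (Complex (Re a3) (Im a1)) \<subseteq> cbox a1 a3 - box a1 a3"
        "closed_segment (Complex (Re a3) (Im a1)) a3 \<subseteq> cbox a1 a3 - box a1 a3"
        "closed_segment a3 (Complex (Re a1) (Im a3)) \<subseteq> cbox a1 a3 - box a1 a3"
        "closed_segment (Complex (Re a1) (Im a3)) a1 \<subseteq> cbox a1 a3 - box a1 a3"
proof -
  have "path_image (rectpath a1 a3) =
          closed_segment a1 (Complex (Re a3) (Im a1)) \<union> closed_segment (Complex (Re a3) (Im a1)) a3 \<union>
          closed_segment a3 (Complex (Re a1) (Im a3)) \<union> closed_segment (Complex (Re a1) (Im a3)) a1"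
    by (simp add: rectpath_def Let_def path_image_join Un_assoc)
  moreover have "path_image (rectpath a1 a3) = cbox a1 a3 - box a1 a3"
    by (rule path_image_rectpath_cbox_minus_box[OF assms])
  ultimately show "closed_segment a1 (Complex (Re a3) (Im a1)) \<subseteq> cbox a1 a3 - box a1 a3"
        "closed_segment (Complex (Re a3) (Im a1)) a3 \<subseteq> cbox a1 a3 - box a1 a3"
        "closed_segment a3 (Complex (Re a1) (Im a3)) \<subseteq> cbox a1 a3 - box a1 a3"
        "closed_segment (Complex (Re a1) (Im a3)) a1 \<subseteq> cbox a1 a3 - box a1 a3"
    by blast+
qed

lemma Pc_cont: "0 < b \<Longrightarrow> b < 1 \<Longrightarrow> 0 < k \<Longrightarrow> continuous_on S0 (Pc b k)"
  by (rule holomorphic_on_imp_continuous_on[OF Pc_holo])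

lemma Pc_horiz:
  assumes b: "0 < b" "b < 1" and k: "0 < k" and x: "-1 < x0" "x0 + k < 2"
      and y: "-pi/3 < y1" "y1 < y2" "y2 < pi/3"
  shows "contour_integral (linepath (Complex x0 y1) (Complex (x0+k) y1)) (Pc b k) =
         contour_integral (linepath (Complex x0 y2) (Complex (x0+k) y2)) (Pc b k)"
proof -
  define A where "A = Complex x0 y1"
  define C where "C = Complex (x0+k) y2"
  define B2 where "B2 = Complex (x0+k) y1"
  define B4 where "B4 = Complex x0 y2"
  have ord: "Re A \<le> Re C" "Im A \<le> Im C" using k y by (auto simp: A_def C_def)
  have cb: "cbox A C \<subseteq> S0"
    using x y k by (auto simp: A_def C_def in_cbox_complex_iff S0_iff)
  note segs = rect_segs_sub[OF ord]
  have B2e: "Complex (Re C) (Im A) = B2" and B4e: "Complex (Re A) (Im C) = B4"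
    by (simp_all add: A_def B2_def C_def B4_def)
  note segs = segs[unfolded B2e B4e]
  have cont: "continuous_on (closed_segment p q) (Pc b k)"
    if "closed_segment p q \<subseteq> cbox A C - box A C" for p q
    by (rule continuous_on_subset[OF Pc_cont[OF b k]]) (use that cb in blast)
  have "((Pc b k) has_contour_integral 0) (rectpath A C)"
    by (rule Cauchy_theorem_convex_simple[OF Pc_holo[OF b k] convex_S0])
       (use cb path_image_rectpath_subset_cbox[OF ord] in auto)
  hence "contour_integral (rectpath A C) (Pc b k) = 0" by (rule contour_integral_unique)
  moreover have "contour_integral (rectpath A C) (Pc b k) =
           contour_integral (linepath A B2) (Pc b k) + contour_integral (linepath B2 C) (Pc b k) +
           contour_integral (linepath C B4) (Pc b k) + contour_integral (linepath B4 A) (Pc b k)"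
    using ci_rect4[of A C "Pc b k"] cont segs unfolding B2e B4e by blast
  moreover have "contour_integral (linepath (A + of_real k) (B4 + of_real k)) (Pc b k) + contour_integral (linepath B4 A) (Pc b k) = 0"
  proof (rule ci_periodic_cancel)
    show "continuous_on (closed_segment A B4) (Pc b k)"
      using cont[OF segs(4)] by (simp add: closed_segment_commute)
    fix w assume "w \<in> closed_segment A B4"
    hence "w \<in> cbox A C" using segs(4) by (auto simp: closed_segment_commute)
    hence "\<bar>Im w\<bar> \<le> pi/3" using y by (auto simp: in_cbox_complex_iff A_def C_def)
    thus "Pc b k (w + of_real k) = Pc b k w" by (rule Pc_periodic[OF b k])
  qed
  moreover have "A + of_real k = B2" "B4 + of_real k = C"
    by (simp_all add: A_def B2_def B4_def C_def complex_eq_iff)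
  moreover have "contour_integral (linepath C B4) (Pc b k) = - contour_integral (linepath B4 C) (Pc b k)"
    by (rule contour_integral_reverse_linepath, rule cont) (use segs(3) in auto)
  ultimately have "contour_integral (linepath A B2) (Pc b k) = contour_integral (linepath B4 C) (Pc b k)"
    by (simp add: algebra_simps)
  thus ?thesis by (simp add: A_def B2_def B4_def C_def)
qed

definition Gr :: "real \<Rightarrow> real \<Rightarrow> real" where
  "Gr b x = exp (2*b*x) / (1 + exp (2*x))"

definition Pr :: "real \<Rightarrow> real \<Rightarrow> real \<Rightarrow> real" where
  "Pr b k x = (\<Sum>n. Gr b (x + real n * k) + Gr b (x - real (Suc n) * k))"

lemma Gr_pos: "Gr b x > 0"
  unfolding Gr_def by (intro divide_pos_pos) (auto intro: add_pos_pos)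

lemma Gc_real: "Gc b (of_real x) = of_real (Gr b x)"
proof -
  have 1: "of_real (2*b) * of_real x = (of_real (2*b*x)::complex)" by simp
  have 2: "exp (of_real (2*b*x)) = (of_real (exp (2*b*x)) :: complex)" by (rule exp_of_real)
  have 3: "2 * (of_real x::complex) = of_real (2*x)" by simp
  have 4: "exp (of_real (2*x)) = (of_real (exp (2*x)) :: complex)" by (rule exp_of_real)
  have 5: "1 + (of_real (exp (2*x))::complex) = of_real (1 + exp (2*x))" by simp
  show ?thesis unfolding Gc_def Gr_def 1 2 3 4 5 by (simp only: of_real_divide)
qed

lemma Gterm_real: "Gterm b k (of_real x) n = of_real (Gr b (x + real n * k) + Gr b (x - real (Suc n) * k))"
proof -
  have e1: "Gc b (of_real x + of_real (real n * k)) = of_real (Gr b (x + real n * k))"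
    using Gc_real[of b "x + real n * k"] by simp
  have e2: "Gc b (of_real x - of_real (real (Suc n) * k)) = of_real (Gr b (x - real (Suc n) * k))"
    using Gc_real[of b "x - real (Suc n) * k"] by simp
  show ?thesis unfolding Gterm_def e1 e2 by simp
qed

lemma Pc_real:
  assumes b: "0 < b" "b < 1" and k: "0 < k"
  shows "Pc b k (of_real x) = of_real (Pr b k x)"
    and "summable (\<lambda>n. Gr b (x + real n * k) + Gr b (x - real (Suc n) * k))"
    and "Pr b k x > 0"
proof -
  have s: "summable (\<lambda>n. Gterm b k (of_real x) n)" by (rule Gterm_summable[OF b k]) simp
  hence s': "summable (\<lambda>n. (of_real (Gr b (x + real n * k) + Gr b (x - real (Suc n) * k)) :: complex))"
    by (simp only: Gterm_real)
  thus sr: "summable (\<lambda>n. Gr b (x + real n * k) + Gr b (x - real (Suc n) * k))"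
    by (simp only: summable_of_real_iff)
  show "Pc b k (of_real x) = of_real (Pr b k x)"
    unfolding Pc_def Pr_def Gterm_real by (rule suminf_of_real[OF sr, symmetric])
  show "Pr b k x > 0" unfolding Pr_def
    by (rule suminf_pos[OF sr]) (intro add_pos_pos Gr_pos)
qed

lemma cos_plus_pi_c: "cos (z + of_real pi) = - cos (z::complex)"
  by (simp add: cos_add cos_of_real sin_of_real)
lemma sin_plus_pi_c: "sin (z + of_real pi) = - sin (z::complex)"
  by (simp add: sin_add cos_of_real sin_of_real)

lemma contour_main:
  fixes b k a :: real
  assumes b: "0 < b" "b < 1" and k: "0 < k" "k \<le> 1" and a: "0 \<le> a" "a \<le> k"
  shows "cmod (of_real k * Pc b k (of_real a) -
           contour_integral (linepath (of_real (a - k/2)) (of_real (a + k/2))) (Pc b k))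
         \<le> 4 * KB b * exp (-(pi^2)/(2*k))"
proof -
  define \<rho> where "\<rho> = pi/4"
  define a1 where "a1 = Complex (a - k/2) (-\<rho>)"
  define a3 where "a3 = Complex (a + k/2) \<rho>"
  define b2 where "b2 = Complex (a + k/2) (-\<rho>)"
  define b4 where "b4 = Complex (a - k/2) \<rho>"
  define u where "u = (\<lambda>w. of_real pi * (w - of_real a) / of_real k :: complex)"
  define f where "f = (\<lambda>w. Pc b k w * (of_real pi * cos (u w)))"
  define g where "g = (\<lambda>w. sin (u w))"
  define F where "F = (\<lambda>w. f w / g w)"
  define S where "S = box (Complex (a - 3*k/4) (-pi/3)) (Complex (a + 3*k/4) (pi/3))"
  define R where "R = contour_integral (linepath (of_real (a - k/2)) (of_real (a + k/2))) (Pc b k)"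
  define t where "t = pi^2/(4*k)"
  define P where "P = Pc b k"
  have pi3: "pi/4 < pi/3" by simp
  have SS0: "S \<subseteq> S0" using k a pi_gt3 by (auto simp: S_def S0_iff in_box_complex_iff)
  have openS: "open S" by (simp add: S_def open_box)
  have convS: "convex S" by (simp add: S_def)
  hence connS: "connected S" by (rule convex_connected)
  have ord: "Re a1 \<le> Re a3" "Im a1 \<le> Im a3" using k by (auto simp: a1_def a3_def \<rho>_def)
  have cbS: "cbox a1 a3 \<subseteq> S"
  proof
    fix x assume "x \<in> cbox a1 a3"
    hence x: "a - k/2 \<le> Re x" "Re x \<le> a + k/2" "-(pi/4) \<le> Im x" "Im x \<le> pi/4"
      by (auto simp: a1_def a3_def in_cbox_complex_iff \<rho>_def)
    have p: "pi > 0" by (rule pi_gt_zero)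
    have "-(pi/3) < Im x" "Im x < pi/3" using x(3,4) p by linarith+
    thus "x \<in> S" using x k by (auto simp: S_def in_box_complex_iff)
  qed
  have a_box: "of_real a \<in> box a1 a3" using k by (auto simp: a1_def a3_def in_box_complex_iff \<rho>_def)
  have aS: "of_real a \<in> S" using a_box cbS box_subset_cbox by blast
  have Pholo: "P holomorphic_on S" unfolding P_def by (rule holomorphic_on_subset[OF Pc_holo[OF b k(1)] SS0])
  have fholo: "f holomorphic_on S" unfolding f_def u_def P_def[symmetric]
    using k by (intro holomorphic_intros Pholo) auto
  have gholo: "g holomorphic_on S" unfolding g_def u_def
    using k by (intro holomorphic_intros) auto
  have gz: "w = of_real a" if wS: "w \<in> S" and g0: "g w = 0" for w
  proof -
    obtain n :: int where n: "u w = of_real (real_of_int n * pi)"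
      using g0 sin_eq_0 unfolding g_def by blast
    have pi0: "(of_real pi :: complex) \<noteq> 0" by simp
    have k0: "(of_real k :: complex) \<noteq> 0" using k by simp
    have "w - of_real a = u w * of_real k / of_real pi" using pi0 k0 by (simp add: u_def field_simps)
    also have "\<dots> = of_real (real_of_int n * k)" using pi0 by (simp add: n field_simps)
    finally have "w - of_real a = of_real (real_of_int n * k)" .
    hence re: "Re w - a = real_of_int n * k" and im: "Im w = 0"
      by (simp_all add: complex_eq_iff)
    have "a - 3*k/4 < Re w" "Re w < a + 3*k/4" using wS by (auto simp: S_def in_box_complex_iff)
    hence "\<bar>Re w - a\<bar> < 3*k/4" by (simp only: abs_less_iff, intro conjI; linarith)
    hence "\<bar>real_of_int n\<bar> * k < 3/4 * k" using re k by (simp add: abs_mult)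
    hence "\<bar>real_of_int n\<bar> < 3/4" using k by simp
    hence "n = 0" by linarith
    thus ?thesis using re im by (simp add: complex_eq_iff)
  qed
  have Fholo: "F holomorphic_on S - {of_real a}" unfolding F_def
    by (intro holomorphic_on_divide holomorphic_on_subset[OF fholo] holomorphic_on_subset[OF gholo])
       (use gz in auto)
  have Fcont: "continuous_on (S - {of_real a}) F"
    by (rule holomorphic_on_imp_continuous_on[OF Fholo])
  have Pa: "P (of_real a) = of_real (Pr b k a)" unfolding P_def by (rule Pc_real[OF b k(1)])
  have Pa0: "Pr b k a > 0" by (rule Pc_real[OF b k(1)])
  have gder: "(g has_field_derivative (of_real pi / of_real k)) (at (of_real a))"
  proof -
    have "(g has_field_derivative (cos (u (of_real a)) * (of_real pi / of_real k))) (at (of_real a))"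
      unfolding g_def u_def using k by (auto intro!: derivative_eq_intros simp: field_simps)
    moreover have "u (of_real a) = 0" by (simp add: u_def)
    ultimately show ?thesis by simp
  qed
  have res: "residue F (of_real a) = of_real k * P (of_real a)"
  proof -
    have "residue (\<lambda>w. f w / g w) (of_real a) = f (of_real a) / (of_real pi / of_real k)"
    proof (rule residue_simple_pole_deriv[OF fholo gholo openS connS aS gder])
      show "f (of_real a) \<noteq> 0" using Pa Pa0 by (simp add: f_def u_def P_def)
      show "g (of_real a) = 0" by (simp add: g_def u_def)
      show "of_real pi / of_real k \<noteq> (0::complex)" using k by simp
    qed
    also have "f (of_real a) = P (of_real a) * of_real pi" by (simp add: f_def u_def P_def)
    finally show ?thesis using k by (simp add: F_def field_simps)
  qed
  have pimg: "path_image (rectpath a1 a3) \<subseteq> S - {of_real a}"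
    using path_image_rectpath_cbox_minus_box[OF ord] cbS a_box by auto
  have wind_out: "\<forall>z. z \<notin> S \<longrightarrow> winding_number (rectpath a1 a3) z = 0"
    using winding_number_rectpath_outside[OF ord] cbS by blast
  have "contour_integral (rectpath a1 a3) F =
          2 * pi * \<i> * (\<Sum>p\<in>{of_real a}. winding_number (rectpath a1 a3) p * residue F p)"
    by (rule Residue_theorem[OF openS connS _ Fholo valid_path_rectpath _ pimg wind_out]) auto
  hence total: "contour_integral (rectpath a1 a3) F = 2 * pi * \<i> * (of_real k * P (of_real a))"
    using winding_number_rectpath[OF a_box] res by simp
  have b2e: "Complex (Re a3) (Im a1) = b2" and b4e: "Complex (Re a1) (Im a3) = b4"
    by (simp_all add: a1_def a3_def b2_def b4_def)
  note segs = rect_segs_sub[OF ord, unfolded b2e b4e]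
  have Fcs: "continuous_on (closed_segment p q) F" if "closed_segment p q \<subseteq> cbox a1 a3 - box a1 a3" for p q
    by (rule continuous_on_subset[OF Fcont]) (use that cbS a_box in blast)
  have Pcs: "continuous_on (closed_segment p q) P" if "closed_segment p q \<subseteq> cbox a1 a3 - box a1 a3" for p q
    by (rule continuous_on_subset[OF holomorphic_on_imp_continuous_on[OF Pholo]]) (use that cbS in blast)
  have Fi: "F contour_integrable_on linepath p q" if "closed_segment p q \<subseteq> cbox a1 a3 - box a1 a3" for p q
    by (rule contour_integrable_continuous_linepath[OF Fcs[OF that]])
  have Pi: "P contour_integrable_on linepath p q" if "closed_segment p q \<subseteq> cbox a1 a3 - box a1 a3" for p q
    by (rule contour_integrable_continuous_linepath[OF Pcs[OF that]])
  have dec: "contour_integral (rectpath a1 a3) F =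
           contour_integral (linepath a1 b2) F + contour_integral (linepath b2 a3) F +
           contour_integral (linepath a3 b4) F + contour_integral (linepath b4 a1) F"
    using ci_rect4[of a1 a3 F] Fcs segs unfolding b2e b4e by blast
  have inbox_im: "\<bar>Im w\<bar> \<le> pi/3" "\<bar>Re w\<bar> \<le> 2" if "w \<in> cbox a1 a3" for w
    using that k a pi3 pi_gt_zero by (auto simp: a1_def a3_def in_cbox_complex_iff \<rho>_def)
  have vert: "contour_integral (linepath b2 a3) F + contour_integral (linepath b4 a1) F = 0"
  proof -
    have "contour_integral (linepath (a1 + of_real k) (b4 + of_real k)) F + contour_integral (linepath b4 a1) F = 0"
    proof (rule ci_periodic_cancel)
      show "continuous_on (closed_segment a1 b4) F"
        using Fcs[OF segs(4)] by (simp add: closed_segment_commute)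
      fix w assume "w \<in> closed_segment a1 b4"
      hence "w \<in> cbox a1 a3" using segs(4) by (auto simp: closed_segment_commute)
      hence "\<bar>Im w\<bar> \<le> pi/3" by (rule inbox_im)
      hence per: "P (w + of_real k) = P w" unfolding P_def by (rule Pc_periodic[OF b k(1)])
      have "u (w + of_real k) = u w + of_real pi" using k by (simp add: u_def field_simps)
      thus "F (w + of_real k) = F w"
        by (simp add: F_def f_def g_def P_def[symmetric] per cos_plus_pi_c sin_plus_pi_c)
    qed
    moreover have "a1 + of_real k = b2" "b4 + of_real k = a3"
      by (simp_all add: a1_def b2_def b4_def a3_def complex_eq_iff)
    ultimately show ?thesis by simp
  qed
  have t2: "2*t \<ge> 1"
  proof -
    have "pi^2 \<ge> 3^2" using pi_gt3 by (intro power_mono) auto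
    hence "pi^2/(2*k) \<ge> 9/(2*1)" using k by (intro frac_le) auto
    thus ?thesis by (simp add: t_def)
  qed
  have e2t: "exp (-2*t) = exp (-(pi^2)/(2*k))" by (simp add: t_def)
  have KB0: "KB b \<ge> 0" using b by (simp add: KB_def)
  define Bd where "Bd = KB b / k * pi * (4 * exp (-2*t))"
  have kerbound: "cmod (F w - c * (\<i> * of_real pi) * P w) \<le> Bd"
    if w: "w \<in> cbox a1 a3" and imu: "Im (u w) = - c * t" and c: "c = 1 \<or> c = -1" for w c
  proof -
    have cot: "sin (u w) \<noteq> 0 \<and> cmod (cos (u w) / sin (u w) - c * \<i>) \<le> 2 * exp (-2*t) / (1 - exp (-2*t))"
    proof (cases "c = 1")
      case True
      have tp: "t > 0" using k by (simp add: t_def)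
      show ?thesis using cot_bound_lower[of "u w" t] imu True tp by simp
    next
      case False
      hence c1: "c = -1" using c by simp
      have tp: "t > 0" using k by (simp add: t_def)
      show ?thesis using cot_bound_upper[of "u w" t] imu c1 tp by simp
    qed
    have eq: "F w - c * (\<i> * of_real pi) * P w = P w * of_real pi * (cos (u w) / sin (u w) - c * \<i>)"
      using cot by (simp add: F_def f_def g_def P_def field_simps)
    have "cmod (F w - c * (\<i> * of_real pi) * P w) = cmod (P w) * pi * cmod (cos (u w) / sin (u w) - c * \<i>)"
      unfolding eq by (simp add: norm_mult)
    also have "\<dots> \<le> cmod (P w) * pi * (4 * exp (-2*t))"
      using cot cot_simpl_bound[OF t2] by (intro mult_left_mono) auto
    also have "cmod (P w) \<le> KB b / k"
      using Pc_bound[OF b k inbox_im[OF w]] k by (simp add: P_def field_simps)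
    hence "cmod (P w) * pi * (4 * exp (-2*t)) \<le> KB b / k * pi * (4 * exp (-2*t))"
      by (intro mult_right_mono) auto
    finally show ?thesis by (simp add: Bd_def)
  qed
  have ciP: "contour_integral (linepath p q) (\<lambda>w. F w - c * P w) =
               contour_integral (linepath p q) F - c * contour_integral (linepath p q) P"
    if "closed_segment p q \<subseteq> cbox a1 a3 - box a1 a3" for p q c
  proof -
    have "contour_integral (linepath p q) (\<lambda>w. F w - c * P w) =
            contour_integral (linepath p q) F - contour_integral (linepath p q) (\<lambda>w. c * P w)"
      by (rule contour_integral_diff[OF Fi[OF that] contour_integrable_lmul[OF Pi[OF that]]])
    also have "contour_integral (linepath p q) (\<lambda>w. c * P w) = c * contour_integral (linepath p q) P"
      by (rule contour_integral_lmul[OF Pi[OF that]])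
    finally show ?thesis .
  qed
  define E1 where "E1 = contour_integral (linepath a1 b2) (\<lambda>w. F w - 1 * (\<i> * of_real pi) * P w)"
  have E1b: "cmod E1 \<le> Bd * k"
  proof -
    have "cmod E1 \<le> Bd * cmod (b2 - a1)" unfolding E1_def
    proof (rule contour_integral_bound_linepath)
      show "(\<lambda>w. F w - 1 * (\<i> * of_real pi) * P w) contour_integrable_on linepath a1 b2"
        by (intro contour_integrable_diff Fi segs contour_integrable_lmul Pi)
      show "0 \<le> Bd" using KB0 k by (simp add: Bd_def)
      fix w assume w: "w \<in> closed_segment a1 b2"
      hence wc: "w \<in> cbox a1 a3" using segs(1) by blast
      have "Im w = -\<rho>" using w by (simp add: closed_segment_same_Im a1_def b2_def)
      hence "Im (u w) = - 1 * t" using k by (simp add: u_def t_def \<rho>_def Im_divide power2_eq_square field_simps)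
      thus "cmod (F w - 1 * (\<i> * of_real pi) * P w) \<le> Bd" using kerbound[of w 1] wc by simp
    qed
    also have "cmod (b2 - a1) = k" using k by (simp add: a1_def b2_def cmod_def)
    finally show ?thesis .
  qed
  have bot: "contour_integral (linepath a1 b2) F = \<i> * of_real pi * contour_integral (linepath a1 b2) P + E1"
    using ciP[OF segs(1), of "1 * (\<i> * of_real pi)"] unfolding E1_def by simp
  define E3 where "E3 = contour_integral (linepath a3 b4) (\<lambda>w. F w - (-1) * (\<i> * of_real pi) * P w)"
  have E3b: "cmod E3 \<le> Bd * k"
  proof -
    have "cmod E3 \<le> Bd * cmod (b4 - a3)" unfolding E3_def
    proof (rule contour_integral_bound_linepath)
      show "(\<lambda>w. F w - (-1) * (\<i> * of_real pi) * P w) contour_integrable_on linepath a3 b4"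
        by (intro contour_integrable_diff Fi segs contour_integrable_lmul Pi)
      show "0 \<le> Bd" using KB0 k by (simp add: Bd_def)
      fix w assume w: "w \<in> closed_segment a3 b4"
      hence wc: "w \<in> cbox a1 a3" using segs(3) by blast
      have "Im w = \<rho>" using w by (simp add: closed_segment_same_Im a3_def b4_def)
      hence "Im (u w) = - (-1) * t" using k by (simp add: u_def t_def \<rho>_def Im_divide power2_eq_square field_simps)
      thus "cmod (F w - (-1) * (\<i> * of_real pi) * P w) \<le> Bd" using kerbound[of w "-1"] wc by simp
    qed
    also have "cmod (b4 - a3) = k" using k by (simp add: a3_def b4_def cmod_def)
    finally show ?thesis .
  qed
  have top: "contour_integral (linepath a3 b4) F = - (\<i> * of_real pi) * contour_integral (linepath a3 b4) P + E3"
    using ciP[OF segs(3), of "(-1) * (\<i> * of_real pi)"] unfolding E3_def by simp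
  have cx: "Complex x 0 = of_real x" for x by (simp add: complex_eq_iff)
  have hb: "contour_integral (linepath a1 b2) P = R"
  proof -
    have "contour_integral (linepath (Complex (a - k/2) (-\<rho>)) (Complex (a - k/2 + k) (-\<rho>))) (Pc b k) =
          contour_integral (linepath (Complex (a - k/2) 0) (Complex (a - k/2 + k) 0)) (Pc b k)"
      by (rule Pc_horiz[OF b k(1)]) (use k a pi_gt_zero in \<open>auto simp: \<rho>_def\<close>)
    moreover have "a - k/2 + k = a + k/2" by simp
    ultimately show ?thesis by (simp add: a1_def b2_def R_def P_def cx)
  qed
  have ht: "contour_integral (linepath b4 a3) P = R"
  proof -
    have "contour_integral (linepath (Complex (a - k/2) 0) (Complex (a - k/2 + k) 0)) (Pc b k) =
          contour_integral (linepath (Complex (a - k/2) \<rho>) (Complex (a - k/2 + k) \<rho>)) (Pc b k)"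
      by (rule Pc_horiz[OF b k(1)]) (use k a pi_gt_zero in \<open>auto simp: \<rho>_def\<close>)
    moreover have "a - k/2 + k = a + k/2" by simp
    ultimately show ?thesis by (simp add: a3_def b4_def R_def P_def cx)
  qed
  have ht': "contour_integral (linepath a3 b4) P = - R"
  proof -
    have "contour_integral (linepath b4 a3) P = - contour_integral (linepath a3 b4) P"
      by (rule contour_integral_reverse_linepath) (use Pcs[OF segs(3)] in \<open>simp add: closed_segment_commute\<close>)
    thus ?thesis using ht by simp
  qed
  have "2 * pi * \<i> * (of_real k * P (of_real a)) = contour_integral (rectpath a1 a3) F"
    using total by simp
  also have "\<dots> = contour_integral (linepath a1 b2) F + contour_integral (linepath a3 b4) F +
      (contour_integral (linepath b2 a3) F + contour_integral (linepath b4 a1) F)"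
    unfolding dec by (simp only: add_ac)
  also have "\<dots> = contour_integral (linepath a1 b2) F + contour_integral (linepath a3 b4) F"
    using vert by simp
  also have "\<dots> = 2 * pi * \<i> * R + E1 + E3"
    unfolding bot top hb ht' by (simp add: algebra_simps)
  finally have "2 * pi * \<i> * (of_real k * P (of_real a)) = 2 * pi * \<i> * R + E1 + E3" .
  hence "of_real k * P (of_real a) - R = (E1 + E3) / (2 * pi * \<i>)"
    by (simp add: field_simps)
  hence "cmod (of_real k * P (of_real a) - R) = cmod (E1 + E3) / (2 * pi)"
    by (simp add: norm_divide norm_mult)
  also have "\<dots> \<le> (Bd * k + Bd * k) / (2 * pi)"
    using norm_triangle_ineq[of E1 E3] E1b E3b by (intro divide_right_mono) auto
  also have "(Bd * k + Bd * k) / (2 * pi) = 4 * KB b * exp (-2*t)"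
    using k by (simp add: Bd_def field_simps)
  finally show ?thesis unfolding R_def P_def e2t .
qed

lemma Gr_cont: "continuous_on A (Gr b)"
  unfolding Gr_def by (intro continuous_intros) (auto intro: add_pos_pos simp: add_pos_pos[THEN less_imp_neq, symmetric])

lemma Gr_logit:
  fixes b u :: real assumes u: "0 < u" "u < 1"
  shows "Gr b ((ln u - ln (1-u))/2) * (1/(2*u*(1-u))) = u powr (b-1) * (1-u) powr ((1-b)-1) / 2"
proof -
  have lnd: "ln u - ln (1-u) = ln (u/(1-u))" using u by (simp add: ln_div)
  have p: "u/(1-u) > 0" using u by simp
  have e1: "exp (2*b*(ln (u/(1-u))/2)) = (u/(1-u)) powr b"
    using p u by (simp add: powr_def)
  have e2: "exp (2*(ln (u/(1-u))/2)) = u/(1-u)" using p by simp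
  have d: "1 + u/(1-u) = 1/(1-u)" using u by (simp add: field_simps)
  have "Gr b (ln (u/(1-u))/2) = (u/(1-u)) powr b * (1-u)"
    unfolding Gr_def e1 e2 d using u by simp
  also have "(u/(1-u)) powr b = u powr b / (1-u) powr b" using u by (simp add: powr_divide)
  finally have G: "Gr b (ln (u/(1-u))/2) = u powr b / (1-u) powr b * (1-u)" .
  have 1: "u powr (b-1) = u powr b / u" using u by (simp add: powr_diff)
  have 2: "(1-u) powr ((1-b)-1) = 1 / (1-u) powr b" using u by (simp add: powr_minus_divide)
  have Q: "(1-u) powr b > 0" using u by simp
  show ?thesis unfolding lnd G 1 2 using u Q by (simp add: field_simps)
qed

lemma Gr_LBINT:
  fixes b :: real assumes b: "0 < b" "b < 1"
  shows "set_integrable lborel (einterval (-\<infinity>) \<infinity>) (Gr b)"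
    and "(LBINT x=-\<infinity>..\<infinity>. Gr b x) = Beta b (1-b) / 2"
proof -
  define g where "g = (\<lambda>u::real. (ln u - ln (1-u))/2)"
  define g' where "g' = (\<lambda>u::real. 1/(2*u*(1-u)))"
  define B where "B = (\<lambda>u::real. u powr (b-1) * (1-u) powr ((1-b)-1) / 2)"
  have deriv: "DERIV g x :> g' x" if "0 < ereal x" "ereal x < 1" for x
  proof -
    have x: "0 < x" "x < 1" using that by (auto simp: zero_ereal_def one_ereal_def)
    show ?thesis unfolding g_def g'_def using x
      by (auto intro!: derivative_eq_intros simp: field_simps power2_eq_square)
  qed
  have contf: "isCont (Gr b) (g x)" for x
    using Gr_cont[of UNIV b] by (simp add: continuous_on_eq_continuous_at)
  have contg': "isCont g' x" if "0 < ereal x" "ereal x < 1" for x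
  proof -
    have x: "0 < x" "x < 1" using that by (auto simp: zero_ereal_def one_ereal_def)
    show ?thesis unfolding g'_def using x by (intro continuous_intros) auto
  qed
  have fnn: "0 \<le> Gr b (g x)" for x using Gr_pos[of b "g x"] by simp
  have g'nn: "0 \<le> g' x" if "0 \<le> ereal x" "ereal x \<le> 1" for x
  proof -
    have x: "0 \<le> x" "x \<le> 1" using that by (auto simp: zero_ereal_def one_ereal_def)
    show ?thesis unfolding g'_def using x by simp
  qed
  have A: "((ereal \<circ> g \<circ> real_of_ereal) \<longlongrightarrow> -\<infinity>) (at_right 0)"
  proof -
    have "filterlim g at_bot (at_right 0)" unfolding g_def by real_asymp
    thus ?thesis by (simp add: zero_ereal_def ereal_tendsto_simps)
  qed
  have Bl: "((ereal \<circ> g \<circ> real_of_ereal) \<longlongrightarrow> \<infinity>) (at_left 1)"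
  proof -
    have "filterlim g at_top (at_left 1)" unfolding g_def by real_asymp
    thus ?thesis by (simp add: one_ereal_def ereal_tendsto_simps)
  qed
  have intB: "set_integrable lborel (einterval 0 1) B"
  proof -
    have "set_integrable lborel {0..1} (\<lambda>t. t powr (b - 1) * (1 - t) powr ((1-b) - 1))"
      using integrable_Beta[of b "1-b"] b by simp
    hence "set_integrable lborel {0<..<1} (\<lambda>t. t powr (b - 1) * (1 - t) powr ((1-b) - 1))"
      by (rule set_integrable_subset) auto
    hence "set_integrable lborel {0<..<1} B" unfolding B_def by (rule set_integrable_divide)
    thus ?thesis by (simp add: zero_ereal_def one_ereal_def)
  qed
  have ei: "einterval 0 1 = {0<..<(1::real)}" by (simp add: zero_ereal_def one_ereal_def)
  have fg: "Gr b (g x) * g' x = B x" if "x \<in> einterval 0 1" for x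
    using that Gr_logit[of x b] unfolding ei g_def g'_def B_def by auto
  have intfg: "set_integrable lborel (einterval 0 1) (\<lambda>x. Gr b (g x) * g' x)"
  proof -
    have "set_integrable lborel (einterval 0 1) (\<lambda>x. Gr b (g x) * g' x) = set_integrable lborel (einterval 0 1) B"
      by (rule set_integrable_cong[OF refl refl fg])
    thus ?thesis using intB by simp
  qed
  note sub = interval_integral_substitution_nonneg[of 0 1 g g' "Gr b" "-\<infinity>" "\<infinity>",
      OF _ deriv contf contg' fnn g'nn A Bl intfg]
  show "set_integrable lborel (einterval (-\<infinity>) \<infinity>) (Gr b)" using sub(1) by simp
  have "(LBINT x=-\<infinity>..\<infinity>. Gr b x) = (LBINT x=0..1. Gr b (g x) * g' x)" using sub(2) by simp
  also have "\<dots> = (LBINT x=0..1. B x)"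
    by (rule interval_integral_cong) (use fg in auto)
  also have "(LBINT x=0..1. B x) = (LBINT x=ereal 0..ereal 1. B x)" by (simp add: zero_ereal_def one_ereal_def)
  also have "\<dots> = integral {0..1} B"
  proof (rule interval_integral_eq_integral)
    have "set_integrable lborel {0..1} (\<lambda>t. t powr (b - 1) * (1 - t) powr ((1-b) - 1))"
      using integrable_Beta[of b "1-b"] b by simp
    thus "set_integrable lborel {0..1} B" unfolding B_def by (rule set_integrable_divide)
  qed simp
  also have "integral {0..1} B = Beta b (1-b) / 2"
  proof -
    have "((\<lambda>t. t powr (b - 1) * (1 - t) powr ((1-b) - 1)) has_integral Beta b (1-b)) {0..1}"
      using has_integral_Beta_real[of b "1-b"] b by simp
    hence "(B has_integral Beta b (1-b) / 2) {0..1}" unfolding B_def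
      by (rule has_integral_divide)
    thus ?thesis by (rule integral_unique)
  qed
  finally show "(LBINT x=-\<infinity>..\<infinity>. Gr b x) = Beta b (1-b) / 2" .
qed

lemma Beta_refl:
  fixes b :: real assumes "0 < b" "b < 1"
  shows "Beta b (1-b) = pi / sin (pi * b)"
proof -
  have g1: "Gamma (1 - complex_of_real b) = complex_of_real (Gamma (1-b))"
    using Gamma_complex_of_real[of "1-b"] by simp
  have "complex_of_real (Gamma b * Gamma (1-b)) = Gamma (complex_of_real b) * Gamma (1 - complex_of_real b)"
    by (simp add: Gamma_complex_of_real g1)
  also have "\<dots> = of_real pi / sin (of_real pi * of_real b)" by (rule Gamma_reflection_complex)
  also have "\<dots> = of_real (pi / sin (pi * b))" by (simp flip: sin_of_real)
  finally have "Gamma b * Gamma (1-b) = pi / sin (pi * b)" by (simp only: of_real_eq_iff)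
  thus ?thesis by (simp add: Beta_def)
qed

definition Ival :: "real \<Rightarrow> real" where "Ival b = pi / (2 * sin (pi * b))"

lemma Gr_integrable: "Gr b integrable_on {x0..x1}"
  by (rule integrable_continuous_interval[OF Gr_cont])

lemma shift_int:
  "integral {c..c+k} (\<lambda>x. Gr b (x + s)) = integral {c+s..c+k+s} (Gr b)"
proof -
  have "(Gr b has_integral integral {c+s..c+k+s} (Gr b)) {c+s..c+k+s}"
    using Gr_integrable by (rule integrable_integral)
  from has_integral_shift_real_ivl[OF this, of s]
  have "((\<lambda>x. Gr b (x + s)) has_integral integral {c+s..c+k+s} (Gr b)) {c..c+k}" by simp
  thus ?thesis by (rule integral_unique)
qed

definition Tn :: "real \<Rightarrow> real \<Rightarrow> real \<Rightarrow> nat \<Rightarrow> real" where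
  "Tn b k c n = integral {c..c+k} (\<lambda>x. Gr b (x + real n * k) + Gr b (x - real (Suc n) * k))"

lemma Tn_eq:
  "Tn b k c n = integral {c + real n * k .. c + real (Suc n) * k} (Gr b) +
                integral {c - real (Suc n) * k .. c - real n * k} (Gr b)"
proof -
  define s where "s = real (Suc n) * k"
  have i1: "(\<lambda>x. Gr b (x + real n * k)) integrable_on {c..c+k}"
    by (rule integrable_continuous_interval) (intro continuous_on_compose2[OF Gr_cont] continuous_intros, auto)
  have i2: "(\<lambda>x. Gr b (x + (-s))) integrable_on {c..c+k}"
    by (rule integrable_continuous_interval) (intro continuous_on_compose2[OF Gr_cont] continuous_intros, auto)
  have fe: "(\<lambda>x. Gr b (x + real n * k) + Gr b (x - s)) = (\<lambda>x. Gr b (x + real n * k) + Gr b (x + (-s)))"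
    by simp
  have "Tn b k c n = integral {c..c+k} (\<lambda>x. Gr b (x + real n * k)) + integral {c..c+k} (\<lambda>x. Gr b (x + (-s)))"
    unfolding Tn_def s_def[symmetric] fe by (rule integral_add[OF i1 i2])
  also have "\<dots> = integral {c + real n * k .. c + k + real n * k} (Gr b) +
                  integral {c + (-s) .. c + k + (-s)} (Gr b)"
    by (simp only: shift_int)
  also have "c + k + real n * k = c + real (Suc n) * k" by (simp add: algebra_simps)
  also have "c + (-s) = c - real (Suc n) * k" by (simp add: s_def)
  also have "c + k + (-s) = c - real n * k" by (simp add: s_def algebra_simps)
  finally show ?thesis .
qed

lemma Tn_sum:
  assumes k: "k > 0"
  shows "(\<Sum>n<N. Tn b k c n) = integral {c - real N * k .. c + real N * k} (Gr b)"
proof (induction N)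
  case 0
  show ?case by simp
next
  case (Suc N)
  have "(\<Sum>n<Suc N. Tn b k c n) = integral {c - real N * k .. c + real N * k} (Gr b) + Tn b k c N"
    using Suc by simp
  also have "\<dots> = integral {c - real (Suc N) * k .. c - real N * k} (Gr b) +
                  (integral {c - real N * k .. c + real N * k} (Gr b) +
                   integral {c + real N * k .. c + real (Suc N) * k} (Gr b))"
    unfolding Tn_eq by simp
  also have "integral {c - real N * k .. c + real N * k} (Gr b) +
                   integral {c + real N * k .. c + real (Suc N) * k} (Gr b) =
             integral {c - real N * k .. c + real (Suc N) * k} (Gr b)"
    using k by (intro Henstock_Kurzweil_Integration.integral_combine Gr_integrable) (auto simp: algebra_simps)
  also have "integral {c - real (Suc N) * k .. c - real N * k} (Gr b) +
               integral {c - real N * k .. c + real (Suc N) * k} (Gr b) =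
             integral {c - real (Suc N) * k .. c + real (Suc N) * k} (Gr b)"
    using k by (intro Henstock_Kurzweil_Integration.integral_combine Gr_integrable) (auto simp: algebra_simps)
  finally show ?case .
qed

lemma Tn_sums:
  assumes b: "0 < b" "b < 1" and k: "k > 0"
  shows "Tn b k c sums Ival b"
proof -
  define l where "l = (\<lambda>i::nat. c - real (Suc i) * k)"
  define u where "u = (\<lambda>i::nat. c + real (Suc i) * k)"
  have lim: "(\<lambda>i. LBINT x=l i..u i. Gr b x) \<longlonglongrightarrow> (LBINT x=-\<infinity>..\<infinity>. Gr b x)"
  proof (rule interval_integral_Icc_approx_integrable)
    show "einterval (-\<infinity>) \<infinity> = (\<Union>i. {l i..u i})"
    proof (rule set_eqI, rule iffI)
      fix x :: real
      obtain n :: nat where n: "\<bar>x - c\<bar> / k < real n" using reals_Archimedean2 by blast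
      hence "\<bar>x - c\<bar> < real n * k" using k by (simp add: field_simps)
      hence "x \<in> {l n..u n}" using k unfolding l_def u_def by (auto simp: abs_less_iff algebra_simps)
      thus "x \<in> (\<Union>i. {l i..u i})" by blast
    qed auto
    show "incseq u" unfolding u_def incseq_def using k by (auto intro!: mult_right_mono)
    show "decseq l" unfolding l_def decseq_def using k by (auto intro!: mult_right_mono)
    show "l i < u i" for i using k by (simp add: l_def u_def)
    show "- \<infinity> < ereal (l i)" for i by simp
    show "ereal (u i) < \<infinity>" for i by simp
    show "(\<lambda>i. ereal (l i)) \<longlonglongrightarrow> - \<infinity>"
    proof -
      have "filterlim l at_bot sequentially" unfolding l_def using k by real_asymp
      hence "((ereal \<circ> l) \<longlongrightarrow> -\<infinity>) sequentially" by (subst ereal_tendsto_simps2)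
      thus ?thesis by (simp add: comp_def)
    qed
    show "(\<lambda>i. ereal (u i)) \<longlonglongrightarrow> \<infinity>"
    proof -
      have "filterlim u at_top sequentially" unfolding u_def using k by real_asymp
      hence "((ereal \<circ> u) \<longlongrightarrow> \<infinity>) sequentially" by (subst ereal_tendsto_simps2)
      thus ?thesis by (simp add: comp_def)
    qed
    show "set_integrable lborel (einterval (- \<infinity>) \<infinity>) (Gr b)" by (rule Gr_LBINT[OF b])
  qed simp
  have eqi: "(LBINT x=l i..u i. Gr b x) = (\<Sum>n<Suc i. Tn b k c n)" for i
  proof -
    have "(LBINT x=l i..u i. Gr b x) = integral {l i..u i} (Gr b)"
      using k by (intro interval_integral_eq_integral borel_integrable_atLeastAtMost' Gr_cont) (simp add: l_def u_def)
    also have "\<dots> = (\<Sum>n<Suc i. Tn b k c n)" unfolding Tn_sum[OF k] by (simp add: l_def u_def)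
    finally show ?thesis .
  qed
  have val: "(LBINT x=-\<infinity>..\<infinity>. Gr b x) = Ival b"
    unfolding Gr_LBINT(2)[OF b] Beta_refl[OF b] Ival_def by simp
  have "(\<lambda>i. \<Sum>n<Suc i. Tn b k c n) \<longlonglongrightarrow> Ival b" using lim unfolding eqi val .
  hence "(\<lambda>N. \<Sum>n<N. Tn b k c n) \<longlonglongrightarrow> Ival b" by (rule LIMSEQ_imp_Suc)
  thus ?thesis by (simp add: sums_def)
qed

lemma R_value:
  assumes b: "0 < b" "b < 1" and k: "0 < k" and c: "-1 < c" "c + k < 2"
  shows "contour_integral (linepath (of_real c) (of_real (c+k))) (Pc b k) = of_real (Ival b)"
proof -
  have seg: "closed_segment (of_real c) (of_real (c+k)) \<subseteq> S0"
  proof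
    fix w assume "w \<in> closed_segment (complex_of_real c) (complex_of_real (c+k))"
    then obtain t where t: "0 \<le> t" "t \<le> 1" "w = (1 - t) *\<^sub>R of_real c + t *\<^sub>R of_real (c+k)"
      unfolding in_segment by blast
    hence "w = of_real (c + t * k)" by (simp add: scaleR_conv_of_real algebra_simps)
    moreover have "c \<le> c + t * k" "c + t * k \<le> c + k" using t k by (auto simp: mult_left_le_one_le)
    ultimately show "w \<in> S0" using c by (auto simp: S0_iff)
  qed
  have ul0: "uniform_limit S0 (\<lambda>N z. \<Sum>n<N. Gterm b k z n) (\<lambda>z. \<Sum>n. Gterm b k z n) sequentially"
    by (rule Weierstrass_m_test[OF _ MB_summable[OF b k]])
       (rule Gterm_MB[OF b k], auto simp: S0_iff)
  have ul: "uniform_limit (closed_segment (of_real c) (of_real (c+k))) (\<lambda>N w. \<Sum>n<N. (\<lambda>n w. Gterm b k w n) n w) (Pc b k) sequentially"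
    using uniform_limit_on_subset[OF ul0 seg] unfolding Pc_def by simp
  have cont: "continuous_on (closed_segment (of_real c) (of_real (c+k))) ((\<lambda>n w. Gterm b k w n) n)" for n
    using holomorphic_on_imp_continuous_on[OF Gterm_holo[of b k n]] seg
    by (auto intro: continuous_on_subset)
  obtain J where J1: "(Pc b k has_contour_integral J) (linepath (of_real c) (of_real (c+k)))"
     and J2: "(\<lambda>n. contour_integral (linepath (of_real c) (of_real (c+k))) ((\<lambda>n w. Gterm b k w n) n)) sums J"
    using contour_integral_sums_linepath[OF ul cont] by blast
  have ci: "contour_integral (linepath (of_real c) (of_real (c+k))) (\<lambda>w. Gterm b k w n) = of_real (Tn b k c n)" for n
  proof -
    have "contour_integral (linepath (of_real c) (of_real (c+k))) (\<lambda>w. Gterm b k w n) =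
          integral {c..c+k} (\<lambda>x. Gterm b k (of_real x) n)"
      using contour_integral_linepath_Reals_eq[of "of_real c" "of_real (c+k)" "\<lambda>w. Gterm b k w n"] k by simp
    also have "\<dots> = integral {c..c+k} (\<lambda>x. of_real (Gr b (x + real n * k) + Gr b (x - real (Suc n) * k)))"
      by (simp only: Gterm_real)
    also have "\<dots> = of_real (Tn b k c n)"
    proof -
      have int: "(\<lambda>x. Gr b (x + real n * k) + Gr b (x - real (Suc n) * k)) integrable_on {c..c+k}"
        by (rule integrable_continuous_interval)
           (intro continuous_intros continuous_on_compose2[OF Gr_cont], auto)
      have "((\<lambda>x. of_real (Gr b (x + real n * k) + Gr b (x - real (Suc n) * k)) :: complex) has_integral of_real (Tn b k c n)) {c..c+k}"
        unfolding Tn_def by (rule has_integral_of_real[OF integrable_integral[OF int]])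
      thus ?thesis by (rule integral_unique)
    qed
    finally show ?thesis .
  qed
  have "(\<lambda>n. (of_real (Tn b k c n) :: complex)) sums J" using J2 ci by simp
  moreover have "(\<lambda>n. (of_real (Tn b k c n) :: complex)) sums of_real (Ival b)"
    using Tn_sums[OF b k, of c] by (simp only: sums_of_real_iff)
  ultimately have "J = of_real (Ival b)" by (rule sums_unique2)
  thus ?thesis using J1 by (simp add: contour_integral_unique)
qed

lemma quad_core_01:
  assumes b: "0 < b" "b < 1" and k: "0 < k" "k \<le> 1" and a: "0 \<le> a" "a \<le> k"
  shows "\<bar>k * Pr b k a - Ival b\<bar> \<le> 4 * KB b * exp (-(pi^2)/(2*k))"
proof -
  have R: "contour_integral (linepath (of_real (a - k/2)) (of_real (a + k/2))) (Pc b k) = of_real (Ival b)"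
    using R_value[OF b k(1), of "a - k/2"] k a by (simp add: algebra_simps)
  have "cmod (of_real k * Pc b k (of_real a) - of_real (Ival b)) \<le> 4 * KB b * exp (-(pi^2)/(2*k))"
    using contour_main[OF b k a] unfolding R .
  moreover have "of_real k * Pc b k (of_real a) - of_real (Ival b) = (of_real (k * Pr b k a - Ival b) :: complex)"
    using Pc_real(1)[OF b k(1)] by simp
  ultimately show ?thesis by (simp only: norm_of_real)
qed

lemma Pr_periodic:
  assumes b: "0 < b" "b < 1" and k: "0 < k"
  shows "Pr b k (x + k) = Pr b k x"
proof -
  have "(of_real (Pr b k (x + k)) :: complex) = Pc b k (of_real x + of_real k)"
    using Pc_real(1)[OF b k, of "x+k"] by simp
  also have "\<dots> = Pc b k (of_real x)" by (rule Pc_periodic[OF b k]) simp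
  also have "\<dots> = of_real (Pr b k x)" by (rule Pc_real(1)[OF b k])
  finally show ?thesis by (simp only: of_real_eq_iff)
qed

lemma Pr_periodic_int:
  assumes b: "0 < b" "b < 1" and k: "0 < k"
  shows "Pr b k (x + real_of_int j * k) = Pr b k x"
proof -
  have nat: "Pr b k (y + real n * k) = Pr b k y" for y n
  proof (induction n)
    case (Suc n)
    have "Pr b k (y + real (Suc n) * k) = Pr b k ((y + real n * k) + k)" by (simp add: algebra_simps)
    also have "\<dots> = Pr b k (y + real n * k)" by (rule Pr_periodic[OF b k])
    finally show ?case using Suc by simp
  qed simp
  show ?thesis
  proof (cases "j \<ge> 0")
    case True
    then obtain n where "j = int n" by (metis nonneg_eq_int)
    thus ?thesis using nat by simp
  next
    case False
    then obtain n where n: "j = - int n" by (metis nle_le nonpos_int_cases)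
    have "Pr b k x = Pr b k ((x - real n * k) + real n * k)" by simp
    also have "\<dots> = Pr b k (x - real n * k)" by (rule nat)
    finally show ?thesis using n by simp
  qed
qed

lemma quad_core:
  assumes b: "0 < b" "b < 1" and k: "0 < k" "k \<le> 1"
  shows "\<bar>k * Pr b k a - Ival b\<bar> \<le> 4 * KB b * exp (-(pi^2)/(2*k))"
proof -
  define j where "j = \<lfloor>a / k\<rfloor>"
  define a' where "a' = a - real_of_int j * k"
  have "real_of_int j \<le> a / k" "a / k < real_of_int j + 1" unfolding j_def by linarith+
  hence "real_of_int j * k \<le> a" "a < (real_of_int j + 1) * k" using k by (simp_all add: field_simps)
  hence a': "0 \<le> a'" "a' \<le> k" unfolding a'_def by (simp_all add: algebra_simps)
  have "Pr b k a = Pr b k (a' + real_of_int j * k)" by (simp add: a'_def)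
  also have "\<dots> = Pr b k a'" by (rule Pr_periodic_int[OF b k(1)])
  finally show ?thesis using quad_core_01[OF b k a'] by simp
qed

lemma sum_int_split:
  fixes m p :: nat and F :: "int \<Rightarrow> 'b::comm_monoid_add"
  shows "(\<Sum>l\<in>{-int m..int p}. F l) = (\<Sum>n\<le>p. F (int n)) + (\<Sum>n<m. F (-int n - 1))"
proof -
  have eq: "{-int m..int p} = int ` {..p} \<union> (\<lambda>n. -int n - 1) ` {..<m}"
  proof (rule set_eqI, rule iffI)
    fix l assume l: "l \<in> {-int m..int p}"
    show "l \<in> int ` {..p} \<union> (\<lambda>n. -int n - 1) ` {..<m}"
    proof (cases "l \<ge> 0")
      case True
      hence "l = int (nat l)" "nat l \<le> p" using l by auto
      thus ?thesis by blast
    next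
      case False
      hence "l = - int (nat (-l-1)) - 1" "nat (-l-1) < m" using l by auto
      thus ?thesis by blast
    qed
  qed auto
  have disj: "int ` {..p} \<inter> (\<lambda>n. -int n - 1) ` {..<m} = {}" by auto
  have inj1: "inj_on int {..p}" by (simp add: inj_on_def)
  have inj2: "inj_on (\<lambda>n. -int n - 1) {..<m}" by (simp add: inj_on_def)
  show ?thesis unfolding eq
    by (subst sum.union_disjoint) (auto simp: disj sum.reindex[OF inj1] sum.reindex[OF inj2])
qed

lemma Gr_le1: "Gr b y \<le> exp (2*b*y)"
proof -
  have p: "0 < 1 + exp (2*y)" using exp_gt_zero[of "2*y"] by linarith
  have "exp (2*b*y) / (1 + exp (2*y)) \<le> exp (2*b*y) / 1"
    by (intro divide_left_mono) (use p in auto)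
  thus ?thesis by (simp add: Gr_def)
qed

lemma Gr_le2: "Gr b y \<le> exp (2*(b-1)*y)"
proof -
  have p: "0 < 1 + exp (2*y)" using exp_gt_zero[of "2*y"] by linarith
  have "exp (2*b*y) / (1 + exp (2*y)) \<le> exp (2*b*y) / exp (2*y)"
    by (intro divide_left_mono) (use p in \<open>auto intro: mult_pos_pos\<close>)
  also have "exp (2*b*y) / exp (2*y) = exp (2*(b-1)*y)" by (simp add: exp_diff[symmetric] algebra_simps)
  finally show ?thesis by (simp add: Gr_def)
qed

lemma term_Gr:
  assumes lam: "lam > 0"
  shows "exp (2*b*y) / (1 + exp (2*y) * lam) = lam powr (-b) * Gr b (y + ln lam / 2)"
proof -
  have l: "lam = exp (ln lam)" using lam by simp
  have "Gr b (y + ln lam / 2) = exp (2*b*y) * exp (b * ln lam) / (1 + exp (2*y) * exp (ln lam))"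
    unfolding Gr_def by (simp add: algebra_simps exp_add[symmetric])
  also have "exp (b * ln lam) = lam powr b" using lam by (simp add: powr_def mult.commute)
  also have "exp (ln lam) = lam" using lam by simp
  finally have "Gr b (y + ln lam / 2) = exp (2*b*y) * lam powr b / (1 + exp (2*y) * lam)" .
  moreover have "lam powr (-b) * lam powr b = 1" using lam by (simp add: powr_add[symmetric])
  ultimately show ?thesis by (simp add: field_simps)
qed

definition qf :: "real \<Rightarrow> real \<Rightarrow> real \<Rightarrow> real" where
  "qf b k lam = (2 * k * sin (pi * b) / pi) *
     (\<Sum>l\<in>{- Kminus b k .. Kplus b k}. exp (2*b*(of_int l*k)) / (1 + exp (2*(of_int l*k)) * lam))"

lemma Kminus_ge: "0 < b \<Longrightarrow> 0 < k \<Longrightarrow> real_of_int (Kminus b k) \<ge> pi^2/(4*b*k^2) \<and> Kminus b k \<ge> 0"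
proof -
  assume "0 < b" "0 < k"
  hence "pi^2/(4*b*k^2) > 0" by simp
  thus ?thesis unfolding Kminus_def by (meson le_of_int_ceiling less_le_trans of_int_0_le_iff order_less_imp_le ceiling_le_zero not_le)
qed

lemma Kplus_ge: "b < 1 \<Longrightarrow> 0 < k \<Longrightarrow> real_of_int (Kplus b k) \<ge> pi^2/(4*(1-b)*k^2) \<and> Kplus b k \<ge> 0"
proof -
  assume "b < 1" "0 < k"
  hence "pi^2/(4*(1-b)*k^2) > 0" by simp
  thus ?thesis unfolding Kplus_def by (meson le_of_int_ceiling less_le_trans of_int_0_le_iff order_less_imp_le ceiling_le_zero not_le)
qed

lemma Kpow_bound:
  fixes c k :: real and K :: int
  assumes "c > 0" "k > 0" "real_of_int K \<ge> pi^2/(2*c*k^2)"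
  shows "exp (-c*k) ^ nat K \<le> exp (-(pi^2)/(2*k))"
proof -
  have K0: "K \<ge> 0"
  proof -
    have "pi^2/(2*c*k^2) > 0" using assms by simp
    thus ?thesis using assms(3) by linarith
  qed
  have "exp (-c*k) ^ nat K = exp (-c*k * real_of_int K)"
    using K0 by (simp add: exp_of_nat_mult[symmetric] mult.commute)
  also have "-c*k * real_of_int K \<le> -c*k * (pi^2/(2*c*k^2))"
    using assms by (intro mult_left_mono_neg) auto
  also have "-c*k * (pi^2/(2*c*k^2)) = -(pi^2)/(2*k)"
    using assms by (simp add: field_simps power2_eq_square)
  finally show ?thesis by simp
qed

lemma abs3:
  fixes x y z :: real assumes "0 \<le> y" "0 \<le> z" shows "\<bar>x - y - z\<bar> \<le> \<bar>x\<bar> + y + z"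
  using assms abs_ge_self[of x] abs_ge_minus_self[of x] unfolding abs_le_iff by (intro conjI; linarith)

lemma quad_bound:
  assumes b: "0 < b" "b < 1" and c0: "c0 > 0"
  shows "\<exists>C>0. \<forall>k lam. 0 < k \<longrightarrow> k \<le> 1 \<longrightarrow> lam \<ge> c0 \<longrightarrow>
           \<bar>qf b k lam - lam powr (-b)\<bar> \<le> C * exp (-(pi^2)/(2*k))"
proof -
  define C where "C = 2/pi * (c0 powr (-b) * (4 * KB b) + 1/(2*(1-b)*c0) + 1/(2*b))"
  have KB0: "KB b \<ge> 0" using b by (simp add: KB_def)
  have Cpos: "C > 0" unfolding C_def using b c0 KB0
    by (intro mult_pos_pos add_nonneg_pos add_nonneg_nonneg mult_nonneg_nonneg) auto
  have main: "\<bar>qf b k lam - lam powr (-b)\<bar> \<le> C * exp (-(pi^2)/(2*k))"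
    if k: "0 < k" "k \<le> 1" and lam: "lam \<ge> c0" for k lam
  proof -
    have lp: "lam > 0" using lam c0 by simp
    define a where "a = ln lam / 2"
    define E where "E = exp (-(pi^2)/(2*k))"
    define m where "m = nat (Kminus b k)"
    define p where "p = nat (Kplus b k)"
    define r where "r = exp (-2*(1-b)*k)"
    define s where "s = exp (-2*b*k)"
    have r1: "norm r < 1" unfolding r_def by (intro exp_neg_lt1 neg1 b k)
    have s1: "norm s < 1" unfolding s_def by (intro exp_neg_lt1 neg2 b k)
    have r0: "r \<ge> 0" "s \<ge> 0" by (simp_all add: r_def s_def)
    define A where "A = (\<lambda>n. Gr b (a + real n * k))"
    define B where "B = (\<lambda>n. Gr b (a - real (Suc n) * k))"
    have Ale: "A n \<le> exp (2*(b-1)*a) * r^n" for n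
    proof -
      have "A n \<le> exp (2*(b-1)*(a + real n * k))" unfolding A_def by (rule Gr_le2)
      also have "\<dots> = exp (2*(b-1)*a) * r^n"
        by (simp add: r_def exp_add[symmetric] exp_of_nat_mult[symmetric] algebra_simps)
      finally show ?thesis .
    qed
    have Ble: "B n \<le> exp (2*b*a) * s^(Suc n)" for n
    proof -
      have "B n \<le> exp (2*b*(a - real (Suc n) * k))" unfolding B_def by (rule Gr_le1)
      also have "\<dots> = exp (2*b*a) * s^(Suc n)"
        by (simp only: s_def exp_of_nat_mult[symmetric]) (simp add: exp_add[symmetric] algebra_simps)
      finally show ?thesis .
    qed
    have A0: "A n \<ge> 0" "B n \<ge> 0" for n unfolding A_def B_def using Gr_pos less_imp_le by blast+
    have sgA: "summable (\<lambda>n. exp (2*(b-1)*a) * r^n)" using r1 by (intro summable_mult summable_geometric)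
    have sgB: "summable (\<lambda>n. exp (2*b*a) * s^(Suc n))"
      using s1 by (intro summable_mult, subst summable_Suc_iff, intro summable_geometric)
    have sA: "summable A" by (rule summable_comparison_test[OF _ sgA]) (use Ale A0 in auto)
    have sB: "summable B" by (rule summable_comparison_test[OF _ sgB]) (use Ble A0 in auto)
    have Pr_eq: "Pr b k a = suminf A + suminf B"
    proof -
      have "Pr b k a = (\<Sum>n. A n + B n)" by (simp add: Pr_def A_def B_def)
      thus ?thesis using suminf_add[OF sA sB] by simp
    qed
    define tA where "tA = (\<Sum>j. A (j + Suc p))"
    define tB where "tB = (\<Sum>j. B (j + m))"
    have splitA: "suminf A = tA + (\<Sum>n<Suc p. A n)" unfolding tA_def by (rule suminf_split_initial_segment[OF sA])
    have splitB: "suminf B = tB + (\<Sum>n<m. B n)" unfolding tB_def by (rule suminf_split_initial_segment[OF sB])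
    have tA_le: "tA \<le> exp (2*(b-1)*a) * (r^(Suc p) / (1 - r))"
    proof -
      have g: "(\<lambda>j. r^j) sums (1/(1-r))" using geometric_sums[OF r1] by simp
      have sm: "(\<lambda>j. exp (2*(b-1)*a) * r^(j + Suc p)) sums (exp (2*(b-1)*a) * (r^(Suc p) * (1/(1-r))))"
        using sums_mult[OF sums_mult[OF g, of "r^Suc p"], of "exp (2*(b-1)*a)"] by (simp add: power_add mult_ac)
      hence "(\<Sum>j. exp (2*(b-1)*a) * r^(j + Suc p)) = exp (2*(b-1)*a) * (r^(Suc p) * (1/(1-r)))"
        by (rule sums_unique[symmetric])
      moreover have "tA \<le> (\<Sum>j. exp (2*(b-1)*a) * r^(j + Suc p))"
        unfolding tA_def
      proof (rule suminf_le)
        show "A (n + Suc p) \<le> exp (2*(b-1)*a) * r^(n + Suc p)" for n by (rule Ale)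
        show "summable (\<lambda>n. A (n + Suc p))" by (rule summable_ignore_initial_segment[OF sA])
        show "summable (\<lambda>n. exp (2*(b-1)*a) * r^(n + Suc p))" by (rule sums_summable[OF sm])
      qed
      ultimately show ?thesis by simp
    qed
    have tB_le: "tB \<le> exp (2*b*a) * (s^(Suc m) / (1 - s))"
    proof -
      have g: "(\<lambda>j. s^j) sums (1/(1-s))" using geometric_sums[OF s1] by simp
      have sm: "(\<lambda>j. exp (2*b*a) * s^(Suc (j + m))) sums (exp (2*b*a) * (s^(Suc m) * (1/(1-s))))"
        using sums_mult[OF sums_mult[OF g, of "s^Suc m"], of "exp (2*b*a)"] by (simp add: power_add mult_ac)
      hence "(\<Sum>j. exp (2*b*a) * s^(Suc (j + m))) = exp (2*b*a) * (s^(Suc m) * (1/(1-s)))"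
        by (rule sums_unique[symmetric])
      moreover have "tB \<le> (\<Sum>j. exp (2*b*a) * s^(Suc (j + m)))"
        unfolding tB_def
      proof (rule suminf_le)
        show "B (n + m) \<le> exp (2*b*a) * s^(Suc (n + m))" for n by (rule Ble)
        show "summable (\<lambda>n. B (n + m))" by (rule summable_ignore_initial_segment[OF sB])
        show "summable (\<lambda>n. exp (2*b*a) * s^(Suc (n + m)))" by (rule sums_summable[OF sm])
      qed
      ultimately show ?thesis by simp
    qed
    define L where "L = lam powr (-b)"
    have L0: "L > 0" using lp by (simp add: L_def)
    have Km: "real_of_int (Kminus b k) \<ge> pi^2/(4*b*k^2)" "Kminus b k \<ge> 0" using Kminus_ge[OF b(1) k(1)] by auto
    have Kp: "real_of_int (Kplus b k) \<ge> pi^2/(4*(1-b)*k^2)" "Kplus b k \<ge> 0" using Kplus_ge[OF b(2) k(1)] by auto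
    have iv: "{- Kminus b k .. Kplus b k} = {-int m..int p}" using Km Kp by (simp add: m_def p_def)
    define tm where "tm = (\<lambda>l::int. exp (2*b*(of_int l*k)) / (1 + exp (2*(of_int l*k)) * lam))"
    have tmA: "tm (int n) = L * A n" for n
      unfolding tm_def L_def A_def using term_Gr[OF lp, of b "real n * k"] by (simp add: a_def algebra_simps)
    have tmB: "tm (-int n - 1) = L * B n" for n
    proof -
      have e: "of_int (-int n - 1) * k = - (real (Suc n) * k)" by (simp add: algebra_simps)
      have "tm (-int n - 1) = exp (2*b*(- (real (Suc n) * k))) / (1 + exp (2*(- (real (Suc n) * k))) * lam)"
        unfolding tm_def e ..
      also have "\<dots> = L * Gr b (- (real (Suc n) * k) + ln lam / 2)" unfolding L_def by (rule term_Gr[OF lp])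
      also have "- (real (Suc n) * k) + ln lam / 2 = a - real (Suc n) * k" by (simp add: a_def)
      finally show ?thesis by (simp add: B_def)
    qed
    have fin: "(\<Sum>l\<in>{- Kminus b k .. Kplus b k}. tm l) = L * (Pr b k a - tA - tB)"
    proof -
      have "(\<Sum>l\<in>{- Kminus b k .. Kplus b k}. tm l) = (\<Sum>n\<le>p. tm (int n)) + (\<Sum>n<m. tm (-int n - 1))"
        unfolding iv by (rule sum_int_split)
      also have "\<dots> = L * ((\<Sum>n<Suc p. A n) + (\<Sum>n<m. B n))"
        by (simp add: tmA tmB sum_distrib_left lessThan_Suc_atMost distrib_left)
      also have "(\<Sum>n<Suc p. A n) + (\<Sum>n<m. B n) = Pr b k a - tA - tB"
        using Pr_eq splitA splitB by simp
      finally show ?thesis .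
    qed
    have qf_eq: "qf b k lam = (2 * sin (pi * b) / pi) * L * (k * Pr b k a - k * tA - k * tB)"
      unfolding qf_def tm_def[symmetric] fin by (simp add: algebra_simps)
    have sinp: "sin (pi * b) > 0" using b by (intro sin_gt_zero) auto
    have sin1: "sin (pi * b) \<le> 1" by simp
    have one: "(2 * sin (pi * b) / pi) * Ival b = 1" using sinp by (simp add: Ival_def)
    have tA0: "tA \<ge> 0" unfolding tA_def by (intro suminf_nonneg summable_ignore_initial_segment[OF sA] A0)
    have tB0: "tB \<ge> 0" unfolding tB_def by (intro suminf_nonneg summable_ignore_initial_segment[OF sB] A0)
    have diff: "qf b k lam - L = (2 * sin (pi * b) / pi) * L * ((k * Pr b k a - Ival b) - k * tA - k * tB)"
    proof -
      have "cc * L * ((k * Pr b k a - Ival b) - k * tA - k * tB) =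
            cc * L * (k * Pr b k a - k * tA - k * tB) - (cc * Ival b) * L" for cc
        by (simp add: algebra_simps)
      from this[of "2 * sin (pi * b) / pi"]
      have "(2 * sin (pi * b) / pi) * L * ((k * Pr b k a - Ival b) - k * tA - k * tB) =
            (2 * sin (pi * b) / pi) * L * (k * Pr b k a - k * tA - k * tB) - ((2 * sin (pi * b) / pi) * Ival b) * L" .
      thus ?thesis unfolding qf_eq one by simp
    qed
    have fac: "\<bar>2 * sin (pi * b) / pi\<bar> \<le> 2 / pi" using sinp sin1 by (simp add: divide_right_mono)
    have core: "\<bar>k * Pr b k a - Ival b\<bar> \<le> 4 * KB b * E" unfolding E_def by (rule quad_core[OF b k])
    have Lc: "L \<le> c0 powr (-b)" unfolding L_def using b c0 lam by (intro powr_mono2') auto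
    have LA: "L * exp (2*(b-1)*a) = 1 / lam"
    proof -
      have "exp (2*(b-1)*a) = lam powr (b-1)" using lp by (simp add: a_def powr_def algebra_simps)
      moreover have "lam powr (-b) * lam powr (b-1) = lam powr (-b + (b-1))" by (rule powr_add[symmetric])
      moreover have "lam powr (-b + (b-1)) = 1 / lam" using lp by (simp add: powr_minus_divide)
      ultimately show ?thesis unfolding L_def by simp
    qed
    have LB: "L * exp (2*b*a) = 1"
    proof -
      have "exp (2*b*a) = lam powr b" using lp by (simp add: a_def powr_def algebra_simps)
      thus ?thesis unfolding L_def using lp by (simp add: powr_add[symmetric])
    qed
    have rp: "r^p \<le> E"
    proof -
      have "exp (-(2*(1-b))*k) ^ nat (Kplus b k) \<le> exp (-(pi^2)/(2*k))"
        by (rule Kpow_bound) (use b k Kp in \<open>auto simp: field_simps\<close>)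
      thus ?thesis by (simp add: r_def p_def E_def)
    qed
    have sm: "s^m \<le> E"
    proof -
      have "exp (-(2*b)*k) ^ nat (Kminus b k) \<le> exp (-(pi^2)/(2*k))"
        by (rule Kpow_bound) (use b k Km in \<open>auto simp: field_simps\<close>)
      thus ?thesis by (simp add: s_def m_def E_def)
    qed
    have gA: "k * (r / (1 - r)) \<le> 1 / (2*(1-b))"
      using geo_k_bound2[of "2*(1-b)" k] b k by (simp add: r_def)
    have gB: "k * (s / (1 - s)) \<le> 1 / (2*b)"
      using geo_k_bound2[of "2*b" k] b k by (simp add: s_def)
    have r1': "r < 1" "s < 1" using r1 s1 r0 by auto
    have E0: "E \<ge> 0" by (simp add: E_def)
    have tAb: "L * (k * tA) \<le> E / (2*(1-b)*c0)"
    proof -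
      have "L * (k * tA) \<le> L * (k * (exp (2*(b-1)*a) * (r^(Suc p) / (1 - r))))"
        using tA_le L0 k by (intro mult_left_mono) auto
      also have "\<dots> = (L * exp (2*(b-1)*a)) * (r^p * (k * (r / (1 - r))))"
        by (simp add: algebra_simps)
      also have "\<dots> = (1/lam) * (r^p * (k * (r / (1 - r))))" unfolding LA ..
      also have "\<dots> \<le> (1/c0) * (E * (1 / (2*(1-b))))"
        using lam c0 rp gA r0 r1' k E0 by (intro mult_mono mult_nonneg_nonneg divide_nonneg_nonneg) (auto simp: frac_le)
      finally show ?thesis by (simp add: mult.commute)
    qed
    have tBb: "L * (k * tB) \<le> E / (2*b)"
    proof -
      have "L * (k * tB) \<le> L * (k * (exp (2*b*a) * (s^(Suc m) / (1 - s))))"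
        using tB_le L0 k by (intro mult_left_mono) auto
      also have "\<dots> = (L * exp (2*b*a)) * (s^m * (k * (s / (1 - s))))"
        by (simp add: algebra_simps)
      also have "\<dots> = s^m * (k * (s / (1 - s)))" unfolding LB by simp
      also have "\<dots> \<le> E * (1 / (2*b))"
        using sm gB r0 r1' k E0 by (intro mult_mono) auto
      finally show ?thesis by simp
    qed
    have "\<bar>qf b k lam - L\<bar> = \<bar>2 * sin (pi * b) / pi\<bar> * (L * \<bar>(k * Pr b k a - Ival b) - k * tA - k * tB\<bar>)"
      unfolding diff using L0 by (simp add: abs_mult)
    also have "\<dots> \<le> 2 / pi * (L * \<bar>k * Pr b k a - Ival b\<bar> + L * (k * tA) + L * (k * tB))"
    proof (rule mult_mono[OF fac])
      have "\<bar>(k * Pr b k a - Ival b) - k * tA - k * tB\<bar> \<le> \<bar>k * Pr b k a - Ival b\<bar> + k * tA + k * tB"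
        using tA0 tB0 k by (intro abs3) auto
      thus "L * \<bar>(k * Pr b k a - Ival b) - k * tA - k * tB\<bar> \<le> L * \<bar>k * Pr b k a - Ival b\<bar> + L * (k * tA) + L * (k * tB)"
        using L0 by (simp add: distrib_left[symmetric] mult_left_mono)
    qed (use L0 in auto)
    also have "\<dots> \<le> 2 / pi * (c0 powr (-b) * (4 * KB b * E) + E / (2*(1-b)*c0) + E / (2*b))"
    proof -
      have "L * \<bar>k * Pr b k a - Ival b\<bar> \<le> c0 powr (-b) * (4 * KB b * E)"
        using Lc core L0 by (intro mult_mono) auto
      thus ?thesis using tAb tBb by (intro mult_left_mono) auto
    qed
    also have "\<dots> = C * E" unfolding C_def by (simp add: algebra_simps)
    finally show ?thesis by (simp add: L_def E_def)
  qed
  show ?thesis using Cpos main by blast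
qed

locale hctx =
  fixes e :: "nat \<Rightarrow> 'a::{real_inner, complete_space}" and lam :: "nat \<Rightarrow> real"
    and V :: "'a set" and N :: nat and Lh :: "'a \<Rightarrow> 'a"
    and eh :: "nat \<Rightarrow> 'a" and lamh :: "nat \<Rightarrow> real"
  assumes e_orth: "\<And>i j. i \<ge> 1 \<Longrightarrow> j \<ge> 1 \<Longrightarrow> inner (e i) (e j) = (if i = j then 1 else 0)"
    and lam_pos: "\<And>j. j \<ge> 1 \<Longrightarrow> lam j > 0"
    and V_sub: "subspace V" "V \<subseteq> domL12 e lam"
    and Lh_def: "\<And>\<psi> \<phi>. \<psi> \<in> V \<Longrightarrow> \<phi> \<in> V \<Longrightarrow> Lh \<psi> \<in> V \<and> inner (Lh \<psi>) \<phi> = formL e lam \<psi> \<phi>"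
    and eh_orth: "\<And>i j. i \<in> {1..N} \<Longrightarrow> j \<in> {1..N} \<Longrightarrow> inner (eh i) (eh j) = (if i = j then 1 else 0)"
    and eh_eig: "\<And>j. j \<in> {1..N} \<Longrightarrow> eh j \<in> V \<and> Lh (eh j) = lamh j *\<^sub>R eh j"
    and lamh_pos: "\<And>j. j \<in> {1..N} \<Longrightarrow> lamh j > 0"
begin

lemma summ_prod:
  assumes "x \<in> domL12 e lam" "y \<in> domL12 e lam"
  shows "summable (\<lambda>j. lam (Suc j) * inner x (e (Suc j)) * inner y (e (Suc j)))"
proof -
  have sx: "summable (\<lambda>j. lam (Suc j) * (inner x (e (Suc j)))\<^sup>2)" using assms(1) by (simp add: domL12_def)
  have sy: "summable (\<lambda>j. lam (Suc j) * (inner y (e (Suc j)))\<^sup>2)" using assms(2) by (simp add: domL12_def)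
  have s: "summable (\<lambda>j. (lam (Suc j) * (inner x (e (Suc j)))\<^sup>2 + lam (Suc j) * (inner y (e (Suc j)))\<^sup>2) / 2)"
    by (intro summable_divide summable_add sx sy)
  show ?thesis
  proof (rule summable_comparison_test'[OF s])
    fix n
    define a where "a = inner x (e (Suc n))"
    define b where "b = inner y (e (Suc n))"
    have l: "lam (Suc n) > 0" by (rule lam_pos) simp
    have "\<bar>a * b\<bar> \<le> (a^2 + b^2) / 2"
    proof -
      have "0 \<le> (\<bar>a\<bar> - \<bar>b\<bar>)^2" by simp
      hence "2 * (\<bar>a\<bar> * \<bar>b\<bar>) \<le> \<bar>a\<bar>^2 + \<bar>b\<bar>^2" by (simp add: power2_eq_square algebra_simps)
      thus ?thesis by (simp add: abs_mult)
    qed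
    hence "lam (Suc n) * \<bar>a * b\<bar> \<le> lam (Suc n) * ((a^2 + b^2) / 2)"
      using l by (intro mult_left_mono) auto
    thus "norm (lam (Suc n) * inner x (e (Suc n)) * inner y (e (Suc n))) \<le>
          (lam (Suc n) * (inner x (e (Suc n)))\<^sup>2 + lam (Suc n) * (inner y (e (Suc n)))\<^sup>2) / 2"
      using l unfolding a_def[symmetric] b_def[symmetric] by (simp add: abs_mult algebra_simps)
  qed
qed

lemma V_dom: "x \<in> V \<Longrightarrow> x \<in> domL12 e lam" using V_sub by blast

lemma formL_sum:
  assumes fin: "finite J" and x: "\<And>j. j \<in> J \<Longrightarrow> x j \<in> V" and y: "y \<in> V"
  shows "formL e lam (\<Sum>j\<in>J. c j *\<^sub>R x j) y = (\<Sum>j\<in>J. c j * formL e lam (x j) y)"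
proof -
  have s: "summable (\<lambda>i. lam (Suc i) * inner (x j) (e (Suc i)) * inner y (e (Suc i)))" if "j \<in> J" for j
    by (intro summ_prod V_dom x y that)
  have "formL e lam (\<Sum>j\<in>J. c j *\<^sub>R x j) y =
        (\<Sum>i. \<Sum>j\<in>J. c j * (lam (Suc i) * inner (x j) (e (Suc i)) * inner y (e (Suc i))))"
    unfolding formL_def by (simp add: inner_sum_left sum_distrib_left sum_distrib_right algebra_simps)
  also have "\<dots> = (\<Sum>j\<in>J. \<Sum>i. c j * (lam (Suc i) * inner (x j) (e (Suc i)) * inner y (e (Suc i))))"
    by (rule suminf_sum) (intro summable_mult s)
  also have "\<dots> = (\<Sum>j\<in>J. c j * formL e lam (x j) y)"
    unfolding formL_def by (auto intro!: sum.cong suminf_mult s)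
  finally show ?thesis .
qed

lemma formL_nonneg:
  assumes "x \<in> V" shows "formL e lam x x \<ge> 0"
proof -
  have "summable (\<lambda>j. lam (Suc j) * inner x (e (Suc j)) * inner x (e (Suc j)))"
    by (intro summ_prod V_dom assms)
  moreover have "lam (Suc j) * inner x (e (Suc j)) * inner x (e (Suc j)) \<ge> 0" for j
    using lam_pos[of "Suc j"] by (simp add: mult.assoc)
  ultimately show ?thesis unfolding formL_def by (intro suminf_nonneg) auto
qed

lemma V_zero_if_orth:
  assumes "d \<in> V" "\<And>\<phi>. \<phi> \<in> V \<Longrightarrow> inner d \<phi> = 0"
  shows "d = 0"
  using assms(2)[OF assms(1)] by simp

lemma eh_V: "j \<in> {1..N} \<Longrightarrow> eh j \<in> V" using eh_eig by blast

lemma sum_eh_V: "(\<Sum>j\<in>{1..N}. c j *\<^sub>R eh j) \<in> V"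
  using V_sub(1) by (intro subspace_sum subspace_scale eh_V) auto

lemma Lh_sum:
  "Lh (\<Sum>j\<in>{1..N}. c j *\<^sub>R eh j) = (\<Sum>j\<in>{1..N}. (c j * lamh j) *\<^sub>R eh j)"
proof -
  define w where "w = (\<Sum>j\<in>{1..N}. c j *\<^sub>R eh j)"
  define r where "r = (\<Sum>j\<in>{1..N}. (c j * lamh j) *\<^sub>R eh j)"
  have wV: "w \<in> V" unfolding w_def by (rule sum_eh_V)
  have rV: "r \<in> V" unfolding r_def by (rule sum_eh_V)
  have LwV: "Lh w \<in> V" using Lh_def[OF wV wV] by blast
  have dV: "Lh w - r \<in> V" using V_sub(1) LwV rV by (rule subspace_diff)
  have "inner (Lh w - r) \<phi> = 0" if \<phi>: "\<phi> \<in> V" for \<phi>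
  proof -
    have "inner (Lh w) \<phi> = formL e lam w \<phi>" using Lh_def[OF wV \<phi>] by blast
    also have "\<dots> = (\<Sum>j\<in>{1..N}. c j * formL e lam (eh j) \<phi>)"
      unfolding w_def by (rule formL_sum) (auto intro: eh_V \<phi>)
    also have "\<dots> = (\<Sum>j\<in>{1..N}. c j * (lamh j * inner (eh j) \<phi>))"
    proof (rule sum.cong[OF refl])
      fix j assume j: "j \<in> {1..N}"
      have "formL e lam (eh j) \<phi> = inner (Lh (eh j)) \<phi>" using Lh_def[OF eh_V[OF j] \<phi>] by simp
      also have "\<dots> = lamh j * inner (eh j) \<phi>" using eh_eig[OF j] by simp
      finally show "c j * formL e lam (eh j) \<phi> = c j * (lamh j * inner (eh j) \<phi>)" by simp
    qed
    also have "\<dots> = inner r \<phi>" unfolding r_def by (simp add: inner_sum_left mult.assoc)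
    finally show ?thesis by (simp add: inner_diff_left)
  qed
  hence "Lh w - r = 0" using V_zero_if_orth[OF dV] by blast
  thus ?thesis unfolding w_def r_def by simp
qed

lemma Lh_diff:
  assumes "v \<in> V" "w \<in> V" shows "Lh (v - w) = Lh v - Lh w"
proof -
  have vw: "v - w \<in> V" using V_sub(1) assms by (rule subspace_diff)
  have dV: "Lh (v - w) - (Lh v - Lh w) \<in> V"
    using V_sub(1) Lh_def[OF vw vw] Lh_def[OF assms(1) assms(1)] Lh_def[OF assms(2) assms(2)]
    by (intro subspace_diff) auto
  have "inner (Lh (v - w) - (Lh v - Lh w)) \<phi> = 0" if \<phi>: "\<phi> \<in> V" for \<phi>
  proof -
    have "formL e lam (v - w) \<phi> = formL e lam (\<Sum>j\<in>{0::nat,1}. (if j = 0 then 1 else -1) *\<^sub>R (if j = 0 then v else w)) \<phi>"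
      by simp
    also have "\<dots> = (\<Sum>j\<in>{0::nat,1}. (if j = 0 then 1 else -1) * formL e lam (if j = 0 then v else w) \<phi>)"
      by (rule formL_sum) (use assms \<phi> in auto)
    also have "\<dots> = formL e lam v \<phi> - formL e lam w \<phi>" by simp
    finally have f: "formL e lam (v - w) \<phi> = formL e lam v \<phi> - formL e lam w \<phi>" .
    show ?thesis using Lh_def[OF vw \<phi>] Lh_def[OF assms(1) \<phi>] Lh_def[OF assms(2) \<phi>] f
      by (simp add: inner_diff_left)
  qed
  thus ?thesis using V_zero_if_orth[OF dV] by simp
qed

lemma Lh_zero: "Lh 0 = 0"
  using Lh_diff[of 0 0] V_sub(1) by (simp add: subspace_0)

lemma resolv_sum:
  assumes t: "t > 0"
  shows "resolv V Lh t (\<Sum>j\<in>{1..N}. c j *\<^sub>R eh j) = (\<Sum>j\<in>{1..N}. (c j / (1 + t * lamh j)) *\<^sub>R eh j)"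
proof -
  define w where "w = (\<Sum>j\<in>{1..N}. c j *\<^sub>R eh j)"
  define v where "v = (\<Sum>j\<in>{1..N}. (c j / (1 + t * lamh j)) *\<^sub>R eh j)"
  have vV: "v \<in> V" unfolding v_def by (rule sum_eh_V)
  have sol: "v + t *\<^sub>R Lh v = w"
  proof -
    have "Lh v = (\<Sum>j\<in>{1..N}. (c j / (1 + t * lamh j) * lamh j) *\<^sub>R eh j)"
      unfolding v_def by (rule Lh_sum)
    hence "v + t *\<^sub>R Lh v = (\<Sum>j\<in>{1..N}. (c j / (1 + t * lamh j) + t * (c j / (1 + t * lamh j) * lamh j)) *\<^sub>R eh j)"
      unfolding v_def by (simp add: scaleR_sum_right sum.distrib[symmetric] scaleR_add_left)
    also have "\<dots> = w" unfolding w_def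
    proof (rule sum.cong[OF refl])
      fix j assume j: "j \<in> {1..N}"
      have D: "1 + t * lamh j > 0" using t lamh_pos[OF j] by (simp add: add_pos_pos)
      have g: "X + t * (X * lamh j) = X * (1 + t * lamh j)" for X by (simp add: algebra_simps)
      have "c j / (1 + t * lamh j) + t * (c j / (1 + t * lamh j) * lamh j) = c j / (1 + t * lamh j) * (1 + t * lamh j)"
        by (rule g)
      also have "\<dots> = c j" using D by simp
      finally have "c j / (1 + t * lamh j) + t * (c j / (1 + t * lamh j) * lamh j) = c j" .
      thus "(c j / (1 + t * lamh j) + t * (c j / (1 + t * lamh j) * lamh j)) *\<^sub>R eh j = c j *\<^sub>R eh j" by simp
    qed
    finally show ?thesis .
  qed
  have uniq: "u = v" if uV: "u \<in> V" and u: "u + t *\<^sub>R Lh u = w" for u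
  proof -
    define d where "d = u - v"
    have dV: "d \<in> V" unfolding d_def using V_sub(1) uV vV by (rule subspace_diff)
    have "d + t *\<^sub>R Lh d = (u + t *\<^sub>R Lh u) - (v + t *\<^sub>R Lh v)"
      unfolding d_def Lh_diff[OF uV vV] by (simp add: algebra_simps)
    also have "\<dots> = 0" unfolding u sol by simp
    finally have "d + t *\<^sub>R Lh d = 0" .
    hence "inner (d + t *\<^sub>R Lh d) d = 0" by simp
    hence "inner d d + t * formL e lam d d = 0"
      using Lh_def[OF dV dV] by (simp add: inner_add_left)
    moreover have "formL e lam d d \<ge> 0" by (rule formL_nonneg[OF dV])
    moreover have "t * formL e lam d d \<ge> 0" using t calculation(2) by (intro mult_nonneg_nonneg) auto
    ultimately have "inner d d \<le> 0" by linarith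
    hence "inner d d = 0" using inner_ge_zero[of d] by linarith
    hence "d = 0" by simp
    thus ?thesis by (simp add: d_def)
  qed
  have "(THE u. u \<in> V \<and> u + t *\<^sub>R Lh u = w) = v"
  proof (rule the_equality)
    show "v \<in> V \<and> v + t *\<^sub>R Lh v = w" using vV sol by blast
    fix u assume "u \<in> V \<and> u + t *\<^sub>R Lh u = w"
    thus "u = v" using uniq by blast
  qed
  thus ?thesis unfolding resolv_def w_def v_def .
qed

end

context hctx begin

definition Ac :: "(nat \<Rightarrow> real) \<Rightarrow> 'a \<Rightarrow> 'a" where
  "Ac c g = (\<Sum>j\<in>{1..N}. (c j * inner g (e j)) *\<^sub>R eh j)"

definition qco :: "real \<Rightarrow> real \<Rightarrow> nat \<Rightarrow> real" where
  "qco \<beta> k j = (2 * k * sin (pi * \<beta>) / pi) *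
     (\<Sum>l\<in>{- Kminus \<beta> k .. Kplus \<beta> k}. exp (2 * \<beta> * (of_int l * k)) / (1 + exp (2 * (of_int l * k)) * lamh j))"

lemma Qt_eq: "Qop V Lh \<beta> k \<circ> Pitilde e eh N = Ac (qco \<beta> k)"
proof (rule ext)
  fix g
  define c where "c = (\<lambda>j. inner g (e j))"
  define K where "K = {- Kminus \<beta> k .. Kplus \<beta> k}"
  have "(Qop V Lh \<beta> k \<circ> Pitilde e eh N) g =
        (2 * k * sin (pi * \<beta>) / pi) *\<^sub>R (\<Sum>l\<in>K. exp (2 * \<beta> * (of_int l * k)) *\<^sub>R
            (\<Sum>j\<in>{1..N}. (c j / (1 + exp (2 * (of_int l * k)) * lamh j)) *\<^sub>R eh j))"
    unfolding Qop_def Pitilde_def comp_def K_def[symmetric] c_def[symmetric]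
    by (simp only: resolv_sum[OF exp_gt_zero] c_def)
  also have "\<dots> = (\<Sum>j\<in>{1..N}. ((2 * k * sin (pi * \<beta>) / pi) *
        (\<Sum>l\<in>K. exp (2 * \<beta> * (of_int l * k)) / (1 + exp (2 * (of_int l * k)) * lamh j)) * c j) *\<^sub>R eh j)"
    by (simp add: scaleR_sum_right scaleR_sum_left sum_distrib_left sum_distrib_right sum.swap[of _ K]
                  mult_ac divide_inverse)
  also have "\<dots> = Ac (qco \<beta> k) g" unfolding Ac_def qco_def K_def c_def by simp
  finally show "(Qop V Lh \<beta> k \<circ> Pitilde e eh N) g = Ac (qco \<beta> k) g" .
qed

lemma inner_Pitilde_eh: "j \<in> {1..N} \<Longrightarrow> inner (Pitilde e eh N g) (eh j) = inner g (e j)"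
proof -
  assume j: "j \<in> {1..N}"
  have "inner (Pitilde e eh N g) (eh j) = (\<Sum>i\<in>{1..N}. inner g (e i) * (if i = j then 1 else 0))"
    unfolding Pitilde_def by (simp add: inner_sum_left eh_orth[OF _ j])
  also have "\<dots> = inner g (e j)" using j by (simp add: if_distrib sum.delta cong: if_cong)
  finally show ?thesis .
qed

lemma Lt_eq: "fracpow eh lamh N \<beta> \<circ> Pitilde e eh N = Ac (\<lambda>j. lamh j powr (-\<beta>))"
proof (rule ext)
  fix g
  show "(fracpow eh lamh N \<beta> \<circ> Pitilde e eh N) g = Ac (\<lambda>j. lamh j powr (-\<beta>)) g"
    unfolding fracpow_def Ac_def comp_def by (intro sum.cong refl) (simp add: inner_Pitilde_eh)
qed

lemma Ac_adj: "hadjoint (Ac c) y = (\<Sum>j\<in>{1..N}. (c j * inner y (eh j)) *\<^sub>R e j)"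
proof -
  define z where "z = (\<Sum>j\<in>{1..N}. (c j * inner y (eh j)) *\<^sub>R e j)"
  have zp: "inner (Ac c x) y = inner x z" for x
    unfolding Ac_def z_def
    by (simp add: inner_sum_left inner_sum_right mult_ac inner_commute)
  have "(THE z. \<forall>x. inner (Ac c x) y = inner x z) = z"
  proof (rule the_equality)
    show "\<forall>x. inner (Ac c x) y = inner x z" using zp by blast
    fix z' assume h: "\<forall>x. inner (Ac c x) y = inner x z'"
    have "inner (z' - z) z' = inner (z' - z) z" using h zp by metis
    hence "inner (z' - z) (z' - z) = 0" by (simp add: inner_diff_right)
    thus "z' = z" by simp
  qed
  thus ?thesis unfolding hadjoint_def z_def .
qed

lemma Ac_Ac_adj: "Ac c (hadjoint (Ac c) y) = (\<Sum>i\<in>{1..N}. ((c i)^2 * inner y (eh i)) *\<^sub>R eh i)"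
proof -
  have "inner (hadjoint (Ac c) y) (e i) = c i * inner y (eh i)" if i: "i \<in> {1..N}" for i
  proof -
    have "inner (hadjoint (Ac c) y) (e i) = (\<Sum>j\<in>{1..N}. c j * inner y (eh j) * (if j = i then 1 else 0))"
      unfolding Ac_adj using i by (simp add: inner_sum_left e_orth)
    also have "\<dots> = c i * inner y (eh i)" using i by (simp add: if_distrib sum.delta cong: if_cong)
    finally show ?thesis .
  qed
  thus ?thesis unfolding Ac_def[of c "hadjoint (Ac c) y"]
    by (intro sum.cong refl) (simp add: power2_eq_square mult_ac)
qed

lemma D_formula:
  "Ac c (hadjoint (Ac c) y) - Ac c' (hadjoint (Ac c') y) =
     (\<Sum>i\<in>{1..N}. (((c i)^2 - (c' i)^2) * inner y (eh i)) *\<^sub>R eh i)"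
  unfolding Ac_Ac_adj by (simp add: sum_subtractf[symmetric] scaleR_diff_left algebra_simps)

end

lemma subspace_orth: "subspace {z. inner w z = 0}"
  by (auto simp: subspace_def inner_add_right)

lemma parseval:
  fixes e :: "nat \<Rightarrow> 'a::real_inner"
  assumes e_orth: "\<And>i j. i \<ge> 1 \<Longrightarrow> j \<ge> 1 \<Longrightarrow> inner (e i) (e j) = (if i = j then 1 else 0)"
      and e_complete: "closure (span (e ` {1..})) = UNIV"
  shows "(\<lambda>j. inner x (e (Suc j)) * inner y (e (Suc j))) sums inner x y"
proof -
  define P where "P = (\<lambda>n x. \<Sum>j<n. inner x (e (Suc j)) *\<^sub>R e (Suc j))"
  define Sp where "Sp = (\<lambda>n::nat. span (e ` {1..n}))"
  have Pin: "inner (P n x) (e (Suc i)) = inner x (e (Suc i))" if "i < n" for n i x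
  proof -
    have "inner (P n x) (e (Suc i)) = (\<Sum>j<n. inner x (e (Suc j)) * (if j = i then 1 else 0))"
      unfolding P_def by (simp add: inner_sum_left e_orth)
    also have "\<dots> = inner x (e (Suc i))" using that by (simp add: if_distrib sum.delta cong: if_cong)
    finally show ?thesis .
  qed
  have orth: "inner (x - P n x) z = 0" if "z \<in> Sp n" for n x z
  proof -
    have "e ` {1..n} \<subseteq> {z. inner (x - P n x) z = 0}"
    proof
      fix w assume "w \<in> e ` {1..n}"
      then obtain i where i: "i \<in> {1..n}" "w = e i" by blast
      then obtain i' where "i = Suc i'" "i' < n" by (cases i) auto
      thus "w \<in> {z. inner (x - P n x) z = 0}" using Pin[of i' n x] i by (simp add: inner_diff_left)
    qed
    hence "Sp n \<subseteq> {z. inner (x - P n x) z = 0}" unfolding Sp_def by (rule span_minimal[OF _ subspace_orth])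
    thus ?thesis using that by blast
  qed
  have PSp: "P n x \<in> Sp n" for n x
    unfolding P_def Sp_def by (intro span_sum span_scale span_base) auto
  have best: "norm (x - P n x) \<le> norm (x - z)" if "z \<in> Sp n" for n x z
  proof -
    have d: "P n x - z \<in> Sp n" unfolding Sp_def using PSp[of n x] that unfolding Sp_def by (rule span_diff)
    have "(norm (x - z))^2 = (norm ((x - P n x) + (P n x - z)))^2" by simp
    also have "\<dots> = (norm (x - P n x))^2 + (norm (P n x - z))^2"
      by (rule norm_add_Pythagorean) (simp add: orthogonal_def orth[OF d])
    finally have "(norm (x - P n x))^2 \<le> (norm (x - z))^2" by simp
    thus ?thesis by (rule power2_le_imp_le) simp
  qed
  have Sp_mono: "M \<le> n \<Longrightarrow> Sp M \<subseteq> Sp n" for M n unfolding Sp_def by (intro span_mono image_mono) auto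
  have union: "z \<in> span (e ` {1..}) \<Longrightarrow> \<exists>M. z \<in> Sp M" for z
  proof -
    assume z: "z \<in> span (e ` {1..})"
    have "subspace {z. \<exists>M. z \<in> Sp M}"
      unfolding subspace_def
    proof (intro conjI allI impI ballI)
      show "0 \<in> {z. \<exists>M. z \<in> Sp M}" unfolding Sp_def by (auto intro: span_zero)
      fix x y assume "x \<in> {z. \<exists>M. z \<in> Sp M}" "y \<in> {z. \<exists>M. z \<in> Sp M}"
      then obtain M1 M2 where "x \<in> Sp M1" "y \<in> Sp M2" by blast
      hence "x \<in> Sp (max M1 M2)" "y \<in> Sp (max M1 M2)" using Sp_mono[of M1 "max M1 M2"] Sp_mono[of M2 "max M1 M2"] by auto
      thus "x + y \<in> {z. \<exists>M. z \<in> Sp M}" unfolding Sp_def by (auto intro: span_add)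
    next
      fix c x assume "x \<in> {z. \<exists>M. z \<in> Sp M}"
      thus "c *\<^sub>R x \<in> {z. \<exists>M. z \<in> Sp M}" unfolding Sp_def by (auto intro: span_scale)
    qed
    moreover have "e ` {1..} \<subseteq> {z. \<exists>M. z \<in> Sp M}"
    proof
      fix w assume "w \<in> e ` {1..}"
      then obtain i where "i \<ge> 1" "w = e i" by auto
      hence "w \<in> Sp i" unfolding Sp_def by (intro span_base) auto
      thus "w \<in> {z. \<exists>M. z \<in> Sp M}" by blast
    qed
    ultimately have "span (e ` {1..}) \<subseteq> {z. \<exists>M. z \<in> Sp M}" by (intro span_minimal)
    thus ?thesis using z by blast
  qed
  have conv: "(\<lambda>n. P n x) \<longlonglongrightarrow> x"
  proof (rule LIMSEQ_I)
    fix r :: real assume r: "r > 0"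
    have "x \<in> closure (span (e ` {1..}))" using e_complete by simp
    then obtain z where z: "z \<in> span (e ` {1..})" "dist z x < r" using r closure_approachable by blast
    obtain M where M: "z \<in> Sp M" using union[OF z(1)] by blast
    show "\<exists>no. \<forall>n\<ge>no. norm (P n x - x) < r"
    proof (intro exI allI impI)
      fix n assume "M \<le> n"
      hence "z \<in> Sp n" using Sp_mono M by blast
      hence "norm (x - P n x) \<le> norm (x - z)" by (rule best)
      also have "norm (x - z) < r" using z(2) by (simp add: dist_norm norm_minus_commute)
      finally show "norm (P n x - x) < r" by (simp add: norm_minus_commute)
    qed
  qed
  have "(\<lambda>n. inner (P n x) y) \<longlonglongrightarrow> inner x y"
    by (intro tendsto_intros conv)
  moreover have "inner (P n x) y = (\<Sum>j<n. inner x (e (Suc j)) * inner y (e (Suc j)))" for n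
    unfolding P_def by (simp add: inner_sum_left inner_sum_right inner_commute)
  ultimately show ?thesis unfolding sums_def by simp
qed

lemma trace_formula:
  fixes e :: "nat \<Rightarrow> 'a::real_inner"
  assumes e_orth: "\<And>i j. i \<ge> 1 \<Longrightarrow> j \<ge> 1 \<Longrightarrow> inner (e i) (e j) = (if i = j then 1 else 0)"
      and e_complete: "closure (span (e ` {1..})) = UNIV"
      and T: "bounded_linear T" and fin: "finite I"
  shows "trace_on e (\<lambda>x. T (\<Sum>i\<in>I. (\<delta> i * inner x (u i)) *\<^sub>R u i)) = (\<Sum>i\<in>I. \<delta> i * inner (T (u i)) (u i))"
proof -
  interpret T: bounded_linear T by (rule T)
  have trm: "inner (T (\<Sum>i\<in>I. (\<delta> i * inner x (u i)) *\<^sub>R u i)) x =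
              (\<Sum>i\<in>I. \<delta> i * (inner (u i) x * inner (T (u i)) x))" for x
    by (simp add: T.sum T.scaleR inner_sum_left inner_sum_right inner_commute mult_ac)
  have "(\<lambda>j. \<Sum>i\<in>I. \<delta> i * (inner (u i) (e (Suc j)) * inner (T (u i)) (e (Suc j)))) sums
          (\<Sum>i\<in>I. \<delta> i * inner (u i) (T (u i)))"
    by (intro sums_sum sums_mult parseval[OF e_orth e_complete])
  hence "trace_on e (\<lambda>x. T (\<Sum>i\<in>I. (\<delta> i * inner x (u i)) *\<^sub>R u i)) = (\<Sum>i\<in>I. \<delta> i * inner (u i) (T (u i)))"
    unfolding trace_on_def trm by (rule sums_unique[symmetric])
  thus ?thesis by (simp add: inner_commute)
qed

definition Fp :: "real \<Rightarrow> real \<Rightarrow> real" where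
  "Fp p x = (if p = 1 then ln x else x powr (1-p) / (1-p))"

lemma Fp_deriv: "x > 0 \<Longrightarrow> (Fp p has_real_derivative x powr (-p)) (at x)"
proof -
  assume x: "x > 0"
  show ?thesis
  proof (cases "p = 1")
    case True
    have "(ln has_real_derivative 1/x) (at x)" using x by (auto intro!: derivative_eq_intros)
    moreover have "x powr (-p) = 1/x" using True x by (simp add: powr_minus_divide)
    ultimately show ?thesis using True by (simp add: Fp_def[abs_def])
  next
    case False
    have "((\<lambda>x. x powr (1-p) / (1-p)) has_real_derivative ((1-p) * x powr (1-p-1)) / (1-p)) (at x)"
      using x by (auto intro!: derivative_eq_intros)
    moreover have "((1-p) * x powr (1-p-1)) / (1-p) = x powr (-p)" using False by simp
    ultimately show ?thesis using False by (simp add: Fp_def[abs_def])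
  qed
qed

lemma Fp_step:
  assumes p: "p > 0" and x: "x \<ge> 1"
  shows "(x+1) powr (-p) \<le> Fp p (x+1) - Fp p x"
proof -
  have "\<exists>z. x < z \<and> z < x+1 \<and> Fp p (x+1) - Fp p x = ((x+1) - x) * z powr (-p)"
    by (rule MVT2) (use x Fp_deriv in auto)
  then obtain z where z: "x < z" "z < x+1" "Fp p (x+1) - Fp p x = z powr (-p)" by auto
  have "(x+1) powr (-p) \<le> z powr (-p)" using z x p by (intro powr_mono2') auto
  thus ?thesis using z by simp
qed

lemma sum_powr_le:
  assumes p: "p > 0" and N: "N \<ge> 1"
  shows "(\<Sum>i\<in>{1..N}. real i powr (-p)) \<le> 1 + Fp p (real N) - Fp p 1"
  using N
proof (induction N rule: dec_induct)
  case base
  show ?case by simp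
next
  case (step n)
  have "(\<Sum>i\<in>{1..Suc n}. real i powr (-p)) = (\<Sum>i\<in>{1..n}. real i powr (-p)) + (real n + 1) powr (-p)"
    by (simp add: add.commute)
  also have "\<dots> \<le> (1 + Fp p (real n) - Fp p 1) + (Fp p (real n + 1) - Fp p (real n))"
    using step Fp_step[OF p, of "real n"] by (intro add_mono) auto
  finally show ?case by (simp add: add.commute)
qed

lemma Fp_diff: "p \<noteq> 1 \<Longrightarrow> Fp p X - Fp p 1 = (X powr (1-p) - 1) / (1-p)"
  by (simp add: Fp_def diff_divide_distrib)

lemma Fp_diff_gt1:
  assumes "p > 1" "X > 0" shows "Fp p X - Fp p 1 \<le> 1 / (p-1)"
proof -
  have "Fp p X - Fp p 1 = (X powr (1-p) - 1) / (1-p)" using assms by (intro Fp_diff) auto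
  also have "\<dots> = (1 - X powr (1-p)) / (p-1)"
    using minus_divide_divide[of "1 - X powr (1-p)" "p-1"] by simp
  also have "\<dots> \<le> 1 / (p-1)" using assms by (intro divide_right_mono) auto
  finally show ?thesis .
qed

lemma Fp_diff_lt1:
  assumes "p < 1" "X > 0" shows "Fp p X - Fp p 1 \<le> X powr (1-p) / (1-p)"
proof -
  have "Fp p X - Fp p 1 = (X powr (1-p) - 1) / (1-p)" using assms by (intro Fp_diff) auto
  also have "\<dots> \<le> X powr (1-p) / (1-p)" using assms by (intro divide_right_mono) auto
  finally show ?thesis .
qed

lemma harm_bound:
  fixes p c2 \<alpha> \<beta> :: real and d :: nat
  assumes p: "p > 0" and c2: "c2 > 0" and pab: "p = \<alpha> * \<beta>"
  shows "\<exists>K1 K2. 0 \<le> K1 \<and> 0 \<le> K2 \<and> (\<forall>h (N::nat). 0 < h \<longrightarrow> h < 1 \<longrightarrow> real N \<le> c2 * h powr (- real d) \<longrightarrow>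
           (\<Sum>i\<in>{1..N}. real i powr (-p)) \<le> K1 + K2 * f_ab (real d) \<alpha> \<beta> h)"
proof -
  have S0: "(\<Sum>i\<in>{1..N}. real i powr (-p)) \<le> 1 + Fp p (real N) - Fp p 1" if "N \<ge> 1" for N
    by (rule sum_powr_le[OF p \<open>N \<ge> 1\<close>])
  consider "p > 1" | "p = 1" | "p < 1" by linarith
  thus ?thesis
  proof cases
    case 1
    have "(\<Sum>i\<in>{1..N}. real i powr (-p)) \<le> 1 + 1/(p-1) + 0 * f_ab (real d) \<alpha> \<beta> h" for h and N :: nat
    proof (cases "N \<ge> 1")
      case True
      have "Fp p (real N) - Fp p 1 \<le> 1 / (p-1)" using 1 True by (intro Fp_diff_gt1) auto
      thus ?thesis using S0[OF True] by simp
    next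
      case False
      hence "N = 0" by simp
      thus ?thesis using 1 by simp
    qed
    thus ?thesis using 1 by (intro exI[of _ "1 + 1/(p-1)"] exI[of _ 0]) auto
  next
    case 2
    have ab: "\<alpha> * \<beta> = 1" using 2 pab by simp
    have "(\<Sum>i\<in>{1..N}. real i powr (-p)) \<le> (1 + \<bar>ln c2\<bar>) + real d * f_ab (real d) \<alpha> \<beta> h"
      if h: "0 < h" "h < 1" and Nb: "real N \<le> c2 * h powr (- real d)" for h and N :: nat
    proof (cases "N \<ge> 1")
      case True
      have "(\<Sum>i\<in>{1..N}. real i powr (-p)) \<le> 1 + ln (real N)" using S0[OF True] 2 by (simp add: Fp_def)
      also have "ln (real N) \<le> ln (c2 * h powr (- real d))" using True Nb by (subst ln_le_cancel_iff) auto
      also have "ln (c2 * h powr (- real d)) = ln c2 + real d * (- ln h)" using c2 h by (simp add: ln_mult ln_powr)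
      also have "\<dots> \<le> \<bar>ln c2\<bar> + real d * \<bar>ln h\<bar>" using h by (intro add_mono mult_left_mono) auto
      finally show ?thesis using ab by (simp add: f_ab_def)
    next
      case False
      hence "N = 0" by simp
      moreover have "0 \<le> real d * \<bar>ln h\<bar>" by simp
      moreover have "0 \<le> \<bar>ln c2\<bar>" by simp
      ultimately show ?thesis using ab by (simp only: f_ab_def if_False not_True_eq_False) simp
    qed
    thus ?thesis by (intro exI[of _ "1 + \<bar>ln c2\<bar>"] exI[of _ "real d"]) auto
  next
    case 3
    have ab: "\<alpha> * \<beta> \<noteq> 1" using 3 pab by simp
    have "(\<Sum>i\<in>{1..N}. real i powr (-p)) \<le> 1 + (c2 powr (1-p) / (1-p)) * f_ab (real d) \<alpha> \<beta> h"
      if h: "0 < h" "h < 1" and Nb: "real N \<le> c2 * h powr (- real d)" for h and N :: nat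
    proof (cases "N \<ge> 1")
      case True
      have "Fp p (real N) - Fp p 1 \<le> real N powr (1-p) / (1-p)"
        using 3 True by (intro Fp_diff_lt1) auto
      also have "real N powr (1-p) \<le> (c2 * h powr (- real d)) powr (1-p)"
        using 3 True Nb by (intro powr_mono2) auto
      also have "(c2 * h powr (- real d)) powr (1-p) = c2 powr (1-p) * h powr (real d * (p - 1))"
        using c2 h by (simp add: powr_mult powr_powr algebra_simps)
      finally have "Fp p (real N) - Fp p 1 \<le> c2 powr (1-p) * h powr (real d * (p - 1)) / (1-p)"
        using 3 by (simp add: divide_right_mono)
      thus ?thesis using S0[OF True] ab pab by (simp add: f_ab_def)
    next
      case False
      hence "N = 0" by simp
      moreover have "0 \<le> c2 powr (1-p) / (1-p) * f_ab (real d) \<alpha> \<beta> h"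
        using 3 h by (simp add: f_ab_def)
      ultimately show ?thesis by simp
    qed
    thus ?thesis using 3 by (intro exI[of _ 1] exI[of _ "c2 powr (1-p) / (1-p)"]) auto
  qed
qed

theorem lemma3p8:
  fixes e :: "nat \<Rightarrow> 'a::{real_inner, complete_space}"
    and lam :: "nat \<Rightarrow> real"
    and \<alpha> clam Clam \<beta> :: real
    and V :: "real \<Rightarrow> 'a set" and N :: "real \<Rightarrow> nat"
    and Lh :: "real \<Rightarrow> 'a \<Rightarrow> 'a"
    and eh :: "real \<Rightarrow> nat \<Rightarrow> 'a" and lamh :: "real \<Rightarrow> nat \<Rightarrow> real"
    and d :: nat and C1 C2 h0 r s q :: real
  assumes e_orth: "\<And>i j. i \<ge> 1 \<Longrightarrow> j \<ge> 1 \<Longrightarrow> inner (e i) (e j) = (if i = j then 1 else 0)"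
    and e_complete: "closure (span (e ` {1..})) = UNIV"
    and lam_mono: "\<And>i j. 1 \<le> i \<Longrightarrow> i \<le> j \<Longrightarrow> lam i \<le> lam j"
    and \<alpha>_pos: "\<alpha> > 0" and c_pos: "clam > 0" and C_pos: "Clam > 0"
    and lam_bounds: "\<And>j. j \<ge> 1 \<Longrightarrow> clam * real j powr \<alpha> \<le> lam j \<and> lam j \<le> Clam * real j powr \<alpha>"
    and \<beta>: "0 < \<beta>" "\<beta> < 1"
    and V_sub: "\<And>h. 0 < h \<Longrightarrow> h < 1 \<Longrightarrow> subspace (V h) \<and> V h \<subseteq> domL12 e lam"
    and V_dim: "\<And>h. 0 < h \<Longrightarrow> h < 1 \<Longrightarrow> dim (V h) = N h"
    and Lh_def: "\<And>h \<psi> \<phi>. 0 < h \<Longrightarrow> h < 1 \<Longrightarrow> \<psi> \<in> V h \<Longrightarrow> \<phi> \<in> V h \<Longrightarrow>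
                   Lh h \<psi> \<in> V h \<and> inner (Lh h \<psi>) \<phi> = formL e lam \<psi> \<phi>"
    and eh_orth: "\<And>h i j. 0 < h \<Longrightarrow> h < 1 \<Longrightarrow> i \<in> {1..N h} \<Longrightarrow> j \<in> {1..N h} \<Longrightarrow>
                   inner (eh h i) (eh h j) = (if i = j then 1 else 0)"
    and eh_eig: "\<And>h j. 0 < h \<Longrightarrow> h < 1 \<Longrightarrow> j \<in> {1..N h} \<Longrightarrow>
                   eh h j \<in> V h \<and> Lh h (eh h j) = lamh h j *\<^sub>R eh h j"
    and lamh_mono: "\<And>h i j. 0 < h \<Longrightarrow> h < 1 \<Longrightarrow> 1 \<le> i \<Longrightarrow> i \<le> j \<Longrightarrow> j \<le> N h \<Longrightarrow>
                   lamh h i \<le> lamh h j"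
    \<comment> \<open>(i)\<close>
    and cond_i: "d \<ge> 1" "\<exists>c1 c2. 0 < c1 \<and> 0 < c2 \<and> (\<forall>h. 0 < h \<and> h < 1 \<longrightarrow>
                   c1 * h powr (- real d) \<le> real (N h) \<and> real (N h) \<le> c2 * h powr (- real d))"
    \<comment> \<open>(ii)\<close>
    and cond_ii: "C1 > 0" "C2 > 0" "0 < h0" "h0 < 1" "r > 0" "s > 0" "q > 1"
    and cond_ii_lam: "\<And>h j. 0 < h \<Longrightarrow> h < h0 \<Longrightarrow> j \<in> {1..N h} \<Longrightarrow>
                   lam j \<le> lamh h j \<and> lamh h j \<le> lam j + C1 * h powr r * lam j powr q"
    and cond_ii_e: "\<And>h j. 0 < h \<Longrightarrow> h < h0 \<Longrightarrow> j \<in> {1..N h} \<Longrightarrow>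
                   (norm (e j - eh h j))\<^sup>2 \<le> C2 * h powr (2 * s) * lam j powr q"
    \<comment> \<open>(iii)\<close>
    and cond_iii: "1 / (2 * \<beta>) < \<alpha>" "\<alpha> \<le> min (r / ((q - 1) * real d)) (2 * s / (q * real d))"
  shows "\<exists>k0 C. k0 > 0 \<and> C > 0 \<and>
    (\<forall>T h k. bounded_linear T \<and> (\<forall>x y. inner (T x) y = inner x (T y)) \<and>
       0 < h \<and> h < h0 \<and> 0 < k \<and> k < k0 \<longrightarrow>
       (let Qt = Qop (V h) (Lh h) \<beta> k \<circ> Pitilde e (eh h) (N h);
            Lt = fracpow (eh h) (lamh h) (N h) \<beta> \<circ> Pitilde e (eh h) (N h)
        in \<bar>trace_on e (\<lambda>x. T (Qt (hadjoint Qt x) - Lt (hadjoint Lt x)))\<bar>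
           \<le> C * (exp (- pi\<^sup>2 / k) * h powr (- real d) + exp (- pi\<^sup>2 / (2 * k))
                  + exp (- pi\<^sup>2 / (2 * k)) * f_ab (real d) \<alpha> \<beta> h) * onorm T))"
proof -
  obtain c1 c2 where c12: "0 < c1" "0 < c2"
    "\<And>h. 0 < h \<Longrightarrow> h < 1 \<Longrightarrow> c1 * h powr (- real d) \<le> real (N h) \<and> real (N h) \<le> c2 * h powr (- real d)"
    using cond_i(2) by blast
  have b: "0 < \<beta>" "\<beta> < 1" using \<beta> by auto
  obtain Cq where Cq: "Cq > 0" and Cqb: "\<And>k lam. 0 < k \<Longrightarrow> k \<le> 1 \<Longrightarrow> lam \<ge> clam \<Longrightarrow>
           \<bar>qf \<beta> k lam - lam powr (-\<beta>)\<bar> \<le> Cq * exp (-(pi^2)/(2*k))"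
    using quad_bound[OF b c_pos] by blast
  define p where "p = \<alpha> * \<beta>"
  have p0: "p > 0" using \<alpha>_pos b by (simp add: p_def)
  obtain K1 K2 where K: "0 \<le> K1" "0 \<le> K2"
    "\<And>h (Nn::nat). 0 < h \<Longrightarrow> h < 1 \<Longrightarrow> real Nn \<le> c2 * h powr (- real d) \<Longrightarrow>
           (\<Sum>i\<in>{1..Nn}. real i powr (-p)) \<le> K1 + K2 * f_ab (real d) \<alpha> \<beta> h"
    using harm_bound[OF p0 c12(2) p_def] by blast
  define cl where "cl = clam powr (-\<beta>)"
  have cl0: "cl > 0" using c_pos by (simp add: cl_def)
  define C where "C = c2 * Cq^2 + 2 * Cq * cl * K1 + 2 * Cq * cl * K2 + 1"
  have Cpos: "C > 0" unfolding C_def using c12 Cq cl0 K by (intro add_nonneg_pos add_nonneg_nonneg mult_nonneg_nonneg) auto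
  have lam_pos: "lam j > 0" if "j \<ge> 1" for j
  proof -
    have "clam * real j powr \<alpha> > 0" using c_pos that by simp
    thus ?thesis using lam_bounds[OF that] by linarith
  qed
  have main: "\<bar>trace_on e (\<lambda>x. T ((Qop (V h) (Lh h) \<beta> k \<circ> Pitilde e (eh h) (N h))
                  (hadjoint (Qop (V h) (Lh h) \<beta> k \<circ> Pitilde e (eh h) (N h)) x) -
                (fracpow (eh h) (lamh h) (N h) \<beta> \<circ> Pitilde e (eh h) (N h))
                  (hadjoint (fracpow (eh h) (lamh h) (N h) \<beta> \<circ> Pitilde e (eh h) (N h)) x)))\<bar>
           \<le> C * (exp (- pi\<^sup>2 / k) * h powr (- real d) + exp (- pi\<^sup>2 / (2 * k))
                  + exp (- pi\<^sup>2 / (2 * k)) * f_ab (real d) \<alpha> \<beta> h) * onorm T"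
    if T: "bounded_linear T" and h: "0 < h" "h < h0" and k: "0 < k" "k < 1" for T h k
  proof -
    have h1: "h < 1" using h cond_ii(4) by linarith
    have lamh_ge: "lamh h j \<ge> lam j" if "j \<in> {1..N h}" for j using cond_ii_lam[OF h that] by blast
    have lamh_pos: "lamh h j > 0" if "j \<in> {1..N h}" for j
      using lamh_ge[OF that] lam_pos[of j] that by force
    have hc: "hctx e lam (V h) (N h) (Lh h) (eh h) (lamh h)"
    proof
      show "\<And>i j. i \<ge> 1 \<Longrightarrow> j \<ge> 1 \<Longrightarrow> inner (e i) (e j) = (if i = j then 1 else 0)" by (rule e_orth)
      show "\<And>j. j \<ge> 1 \<Longrightarrow> lam j > 0" by (rule lam_pos)
      show "subspace (V h)" "V h \<subseteq> domL12 e lam" using V_sub[OF h(1) h1] by auto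
      show "\<And>\<psi> \<phi>. \<psi> \<in> V h \<Longrightarrow> \<phi> \<in> V h \<Longrightarrow> Lh h \<psi> \<in> V h \<and> inner (Lh h \<psi>) \<phi> = formL e lam \<psi> \<phi>"
        by (rule Lh_def[OF h(1) h1])
      show "\<And>i j. i \<in> {1..N h} \<Longrightarrow> j \<in> {1..N h} \<Longrightarrow> inner (eh h i) (eh h j) = (if i = j then 1 else 0)"
        by (rule eh_orth[OF h(1) h1])
      show "\<And>j. j \<in> {1..N h} \<Longrightarrow> eh h j \<in> V h \<and> Lh h (eh h j) = lamh h j *\<^sub>R eh h j"
        by (rule eh_eig[OF h(1) h1])
      show "\<And>j. j \<in> {1..N h} \<Longrightarrow> lamh h j > 0" by (rule lamh_pos)
    qed
    define q where "q = hctx.qco (lamh h) \<beta> k"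
    define P where "P = (\<lambda>j. lamh h j powr (-\<beta>))"
    define \<delta> where "\<delta> = (\<lambda>i. (q i)^2 - (P i)^2)"
    define E where "E = Cq * exp (-(pi^2)/(2*k))"
    have E0: "E \<ge> 0" using Cq by (simp add: E_def)
    have Qt: "Qop (V h) (Lh h) \<beta> k \<circ> Pitilde e (eh h) (N h) = hctx.Ac e (N h) (eh h) q"
      unfolding q_def by (rule hctx.Qt_eq[OF hc])
    have Lt: "fracpow (eh h) (lamh h) (N h) \<beta> \<circ> Pitilde e (eh h) (N h) = hctx.Ac e (N h) (eh h) P"
      unfolding P_def by (rule hctx.Lt_eq[OF hc])
    have D: "(\<lambda>x. T ((Qop (V h) (Lh h) \<beta> k \<circ> Pitilde e (eh h) (N h))
                  (hadjoint (Qop (V h) (Lh h) \<beta> k \<circ> Pitilde e (eh h) (N h)) x) -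
                (fracpow (eh h) (lamh h) (N h) \<beta> \<circ> Pitilde e (eh h) (N h))
                  (hadjoint (fracpow (eh h) (lamh h) (N h) \<beta> \<circ> Pitilde e (eh h) (N h)) x)))
           = (\<lambda>x. T (\<Sum>i\<in>{1..N h}. (\<delta> i * inner x (eh h i)) *\<^sub>R eh h i))"
      unfolding Qt Lt hctx.D_formula[OF hc] \<delta>_def ..
    have tr: "trace_on e (\<lambda>x. T (\<Sum>i\<in>{1..N h}. (\<delta> i * inner x (eh h i)) *\<^sub>R eh h i)) =
              (\<Sum>i\<in>{1..N h}. \<delta> i * inner (T (eh h i)) (eh h i))"
      by (rule trace_formula[OF e_orth e_complete T finite_atLeastAtMost])
    have inT: "\<bar>inner (T (eh h i)) (eh h i)\<bar> \<le> onorm T" if i: "i \<in> {1..N h}" for i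
    proof -
      have n1: "norm (eh h i) = 1" using eh_orth[OF h(1) h1 i i] by (simp add: norm_eq_sqrt_inner)
      have "\<bar>inner (T (eh h i)) (eh h i)\<bar> \<le> norm (T (eh h i)) * norm (eh h i)" by (rule Cauchy_Schwarz_ineq2)
      also have "\<dots> \<le> onorm T * norm (eh h i) * norm (eh h i)"
        using onorm[OF T, of "eh h i"] by (intro mult_right_mono) auto
      finally show ?thesis using n1 by simp
    qed
    have qf_eq: "q i = qf \<beta> k (lamh h i)" for i
      unfolding q_def hctx.qco_def[OF hc] qf_def by simp
    have Pb: "P i \<le> cl * real i powr (-p)" if i: "i \<in> {1..N h}" for i
    proof -
      have i1: "i \<ge> 1" using i by simp
      have lb: "clam * real i powr \<alpha> \<le> lamh h i" using lam_bounds[OF i1] lamh_ge[OF i] by linarith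
      have pos: "clam * real i powr \<alpha> > 0" using c_pos i1 by simp
      have "P i \<le> (clam * real i powr \<alpha>) powr (-\<beta>)" unfolding P_def
        using lb pos b by (intro powr_mono2') auto
      also have "\<dots> = cl * real i powr (-p)"
        using c_pos i1 by (simp add: cl_def p_def powr_mult powr_powr)
      finally show ?thesis .
    qed
    have P0: "P i \<ge> 0" for i by (simp add: P_def)
    have db: "\<bar>\<delta> i\<bar> \<le> E * E + 2 * E * (cl * real i powr (-p))" if i: "i \<in> {1..N h}" for i
    proof -
      have lc: "lamh h i \<ge> clam"
      proof -
        have i1: "i \<ge> 1" using i by simp
        have "clam * 1 \<le> clam * real i powr \<alpha>" using c_pos i1 \<alpha>_pos by (intro mult_left_mono) (auto simp: ge_one_powr_ge_zero)
        thus ?thesis using lam_bounds[OF i1] lamh_ge[OF i] by linarith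
      qed
      have e: "\<bar>q i - P i\<bar> \<le> E" unfolding qf_eq P_def E_def using Cqb[OF k(1) _ lc] k by simp
      have "\<bar>\<delta> i\<bar> = \<bar>q i - P i\<bar> * \<bar>q i + P i\<bar>" unfolding \<delta>_def by (simp add: power2_eq_square abs_mult[symmetric] algebra_simps)
      also have "\<bar>q i + P i\<bar> \<le> \<bar>q i - P i\<bar> + 2 * P i" using P0[of i] by linarith
      hence "\<bar>q i - P i\<bar> * \<bar>q i + P i\<bar> \<le> E * (E + 2 * P i)"
        using e E0 P0[of i] by (intro mult_mono) auto
      also have "E * (E + 2 * P i) \<le> E * (E + 2 * (cl * real i powr (-p)))"
        using Pb[OF i] E0 by (intro mult_left_mono) auto
      finally show ?thesis by (simp add: algebra_simps)
    qed
    have sumd: "(\<Sum>i\<in>{1..N h}. \<bar>\<delta> i\<bar>) \<le> real (N h) * (E * E) + 2 * E * cl * (\<Sum>i\<in>{1..N h}. real i powr (-p))"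
    proof -
      have "(\<Sum>i\<in>{1..N h}. \<bar>\<delta> i\<bar>) \<le> (\<Sum>i\<in>{1..N h}. E * E + 2 * E * (cl * real i powr (-p)))"
        by (rule sum_mono) (rule db)
      also have "\<dots> = real (N h) * (E * E) + 2 * E * cl * (\<Sum>i\<in>{1..N h}. real i powr (-p))"
        by (simp add: sum.distrib sum_distrib_left mult_ac)
      finally show ?thesis .
    qed
    have Nb: "real (N h) \<le> c2 * h powr (- real d)" using c12(3)[OF h(1) h1] by blast
    have EE: "E * E = Cq^2 * exp (- pi\<^sup>2 / k)"
    proof -
      have "exp (-(pi^2)/(2*k)) * exp (-(pi^2)/(2*k)) = exp (- pi\<^sup>2 / k)"
        using k by (simp add: exp_add[symmetric] field_simps)
      thus ?thesis by (simp add: E_def power2_eq_square mult_ac)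
    qed
    define A where "A = exp (- pi\<^sup>2 / k) * h powr (- real d)"
    define B where "B = exp (- pi\<^sup>2 / (2 * k))"
    define f where "f = f_ab (real d) \<alpha> \<beta> h"
    have f0: "f \<ge> 0" by (simp add: f_def f_ab_def)
    have A0: "A \<ge> 0" "B \<ge> 0" by (simp_all add: A_def B_def)
    have EB: "E = Cq * B" by (simp add: E_def B_def)
    have onT: "onorm T \<ge> 0" by (rule onorm_pos_le[OF T])
    have "\<bar>\<Sum>i\<in>{1..N h}. \<delta> i * inner (T (eh h i)) (eh h i)\<bar> \<le> (\<Sum>i\<in>{1..N h}. \<bar>\<delta> i\<bar> * onorm T)"
    proof -
      have "\<bar>\<Sum>i\<in>{1..N h}. \<delta> i * inner (T (eh h i)) (eh h i)\<bar> \<le> (\<Sum>i\<in>{1..N h}. \<bar>\<delta> i * inner (T (eh h i)) (eh h i)\<bar>)"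
        by (rule sum_abs)
      also have "\<dots> \<le> (\<Sum>i\<in>{1..N h}. \<bar>\<delta> i\<bar> * onorm T)"
        by (rule sum_mono) (simp add: abs_mult inT mult_left_mono)
      finally show ?thesis .
    qed
    also have "\<dots> = (\<Sum>i\<in>{1..N h}. \<bar>\<delta> i\<bar>) * onorm T" by (simp add: sum_distrib_right)
    also have "\<dots> \<le> (real (N h) * (E * E) + 2 * E * cl * (\<Sum>i\<in>{1..N h}. real i powr (-p))) * onorm T"
      by (rule mult_right_mono[OF sumd onT])
    also have "\<dots> \<le> (c2 * Cq^2 * A + 2 * Cq * cl * K1 * B + 2 * Cq * cl * K2 * (B * f)) * onorm T"
    proof (rule mult_right_mono[OF _ onT])
      have 1: "real (N h) * (E * E) \<le> c2 * Cq^2 * A"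
      proof -
        have "real (N h) * (E * E) \<le> (c2 * h powr (- real d)) * (E * E)"
          using Nb E0 by (intro mult_right_mono) auto
        thus ?thesis by (simp add: EE A_def mult_ac)
      qed
      have 2: "2 * E * cl * (\<Sum>i\<in>{1..N h}. real i powr (-p)) \<le> 2 * E * cl * (K1 + K2 * f)"
        using K(3)[OF h(1) h1 Nb] E0 cl0 by (intro mult_left_mono) (auto simp: f_def)
      have 3: "2 * E * cl * (K1 + K2 * f) = 2 * Cq * cl * K1 * B + 2 * Cq * cl * K2 * (B * f)"
        by (simp add: EB algebra_simps)
      show "real (N h) * (E * E) + 2 * E * cl * (\<Sum>i\<in>{1..N h}. real i powr (-p))
            \<le> c2 * Cq^2 * A + 2 * Cq * cl * K1 * B + 2 * Cq * cl * K2 * (B * f)"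
        using 1 2 3 by linarith
    qed
    also have "\<dots> \<le> C * (A + B + B * f) * onorm T"
    proof (rule mult_right_mono[OF _ onT])
      have Bf: "B * f \<ge> 0" using A0 f0 by simp
      have c1': "c2 * Cq^2 \<le> C" "2 * Cq * cl * K1 \<le> C" "2 * Cq * cl * K2 \<le> C"
        unfolding C_def using c12 Cq cl0 K by (auto intro!: mult_nonneg_nonneg)
      have "c2 * Cq^2 * A \<le> C * A" using c1'(1) A0 by (intro mult_right_mono) auto
      moreover have "2 * Cq * cl * K1 * B \<le> C * B" using c1'(2) A0 by (intro mult_right_mono) auto
      moreover have "2 * Cq * cl * K2 * (B * f) \<le> C * (B * f)" using c1'(3) Bf by (intro mult_right_mono) auto
      ultimately show "c2 * Cq^2 * A + 2 * Cq * cl * K1 * B + 2 * Cq * cl * K2 * (B * f) \<le> C * (A + B + B * f)"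
        by (simp add: distrib_left)
    qed
    finally show ?thesis unfolding D tr A_def B_def f_def .
  qed
  have all: "\<forall>T h k. bounded_linear T \<and> (\<forall>x y. inner (T x) y = inner x (T y)) \<and> 0 < h \<and> h < h0 \<and> 0 < k \<and> k < 1 \<longrightarrow>
       (let Qt = Qop (V h) (Lh h) \<beta> k \<circ> Pitilde e (eh h) (N h);
            Lt = fracpow (eh h) (lamh h) (N h) \<beta> \<circ> Pitilde e (eh h) (N h)
        in \<bar>trace_on e (\<lambda>x. T (Qt (hadjoint Qt x) - Lt (hadjoint Lt x)))\<bar>
           \<le> C * (exp (- pi\<^sup>2 / k) * h powr (- real d) + exp (- pi\<^sup>2 / (2 * k))
                  + exp (- pi\<^sup>2 / (2 * k)) * f_ab (real d) \<alpha> \<beta> h) * onorm T)"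
  proof (intro allI impI)
    fix T :: "'a \<Rightarrow> 'a" and h k :: real
    assume a: "bounded_linear T \<and> (\<forall>x y. inner (T x) y = inner x (T y)) \<and> 0 < h \<and> h < h0 \<and> 0 < k \<and> k < 1"
    show "let Qt = Qop (V h) (Lh h) \<beta> k \<circ> Pitilde e (eh h) (N h);
            Lt = fracpow (eh h) (lamh h) (N h) \<beta> \<circ> Pitilde e (eh h) (N h)
        in \<bar>trace_on e (\<lambda>x. T (Qt (hadjoint Qt x) - Lt (hadjoint Lt x)))\<bar>
           \<le> C * (exp (- pi\<^sup>2 / k) * h powr (- real d) + exp (- pi\<^sup>2 / (2 * k))
                  + exp (- pi\<^sup>2 / (2 * k)) * f_ab (real d) \<alpha> \<beta> h) * onorm T"
      unfolding Let_def using main a by blast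
  qed
  have one: "(0::real) < 1" by simp
  show ?thesis using one Cpos all by blast
qed

end
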